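(* A family $\{\Theta_n\}_{n\ge0}$ of lattice congruences ($\Theta_n$ on the weak order $S_n$) is translational if and only if it has the form $\{\mathrm{Tr}(C)_n\}_{n\ge0}$ for some set $C$ of untranslated join-irreducible permutations of various sizes.
   Context: $S_n$: permutations of $[n]$ in one-line notation with the right weak order (inclusion of sets of inverted value pairs), a lattice. Join-irreducibles are the permutations with exactly one descent; $\gamma_*$ is the unique element covered by $\gamma$, and a congruence contracts $\gamma$ if $\gamma\equiv\gamma_*$. For $u\in S_p,v\in S_q$, $u\times v=u_1\cdots u_p(p+v_1)\cdots(p+v_q)\in S_{p+q}$; $1_k$ is the identity of $S_k$. $x\in S_n$ is a translate of $y\in S_k$ if $x=1_p\times y\times1_q$ for some $p,q\ge0$; $x$ is untranslated if $x_1>1$ and $x_n<n$. The family is translational if for all $p,q\ge0$, $u,u'\in S_p$, $v,v'\in S_q$: $u\times v\equiv u'\times v'$ mod $\Theta_{p+q}$ iff $u\equiv u'$ mod $\Theta_p$ and $v\equiv v'$ mod $\Theta_q$. For a set $C$ of untranslated join-irreducibles, $\mathrm{Tr}(C)_n$ is the smallest congruence on $S_n$ contracting every join-irreducible of $S_n$ that is a translate of some element of $C$. *)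

theory Defs
  imports Main
begin

definition perms :: "nat \<Rightarrow> nat list set" where
  "perms n = {w. length w = n \<and> distinct w \<and> set w = {1..n}}"

definition inv_set :: "nat list \<Rightarrow> (nat \<times> nat) set" where
  "inv_set w = {(a, b). a < b \<and> (\<exists>i j. i < j \<and> j < length w \<and> w ! i = b \<and> w ! j = a)}"

definition weak_le :: "nat list \<Rightarrow> nat list \<Rightarrow> bool" where
  "weak_le u v \<longleftrightarrow> inv_set u \<subseteq> inv_set v"

definition weak_less :: "nat list \<Rightarrow> nat list \<Rightarrow> bool" where
  "weak_less u v \<longleftrightarrow> weak_le u v \<and> u \<noteq> v"

definition is_join :: "nat \<Rightarrow> nat list \<Rightarrow> nat list \<Rightarrow> nat list \<Rightarrow> bool" where
  "is_join n x y z \<longleftrightarrow> z \<in> perms n \<and> weak_le x z \<and> weak_le y z \<and>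
     (\<forall>w\<in>perms n. weak_le x w \<and> weak_le y w \<longrightarrow> weak_le z w)"

definition is_meet :: "nat \<Rightarrow> nat list \<Rightarrow> nat list \<Rightarrow> nat list \<Rightarrow> bool" where
  "is_meet n x y z \<longleftrightarrow> z \<in> perms n \<and> weak_le z x \<and> weak_le z y \<and>
     (\<forall>w\<in>perms n. weak_le w x \<and> weak_le w y \<longrightarrow> weak_le w z)"

definition wjoin :: "nat \<Rightarrow> nat list \<Rightarrow> nat list \<Rightarrow> nat list" where
  "wjoin n x y = (THE z. is_join n x y z)"

definition wmeet :: "nat \<Rightarrow> nat list \<Rightarrow> nat list \<Rightarrow> nat list" where
  "wmeet n x y = (THE z. is_meet n x y z)"

definition lattice_cong :: "nat \<Rightarrow> (nat list \<times> nat list) set \<Rightarrow> bool" where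
  "lattice_cong n \<Theta> \<longleftrightarrow> equiv (perms n) \<Theta> \<and>
     (\<forall>x\<in>perms n. \<forall>y\<in>perms n. \<forall>z\<in>perms n. (x, y) \<in> \<Theta> \<longrightarrow>
        (wjoin n x z, wjoin n y z) \<in> \<Theta> \<and> (wmeet n x z, wmeet n y z) \<in> \<Theta>)"

definition covers :: "nat list \<Rightarrow> nat list \<Rightarrow> bool" where
  "covers x y \<longleftrightarrow> weak_less x y \<and>
     \<not> (\<exists>z\<in>perms (length y). weak_less x z \<and> weak_less z y)"

definition join_irreducible :: "nat list \<Rightarrow> bool" where
  "join_irreducible g \<longleftrightarrow> g \<in> perms (length g) \<and>
     (\<exists>!x. x \<in> perms (length g) \<and> covers x g)"

definition lower_cover :: "nat list \<Rightarrow> nat list" where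
  "lower_cover g = (THE x. x \<in> perms (length g) \<and> covers x g)"

definition contracts :: "(nat list \<times> nat list) set \<Rightarrow> nat list \<Rightarrow> bool" where
  "contracts \<Theta> g \<longleftrightarrow> (g, lower_cover g) \<in> \<Theta>"

definition perm_prod :: "nat list \<Rightarrow> nat list \<Rightarrow> nat list" (infixl "\<otimes>" 70) where
  "u \<otimes> v = u @ map (\<lambda>i. length u + i) v"

definition ident :: "nat \<Rightarrow> nat list" where
  "ident k = [1..<k+1]"

definition is_translate :: "nat list \<Rightarrow> nat list \<Rightarrow> bool" where
  "is_translate x y \<longleftrightarrow> (\<exists>p q. x = ident p \<otimes> y \<otimes> ident q)"

definition untranslated :: "nat list \<Rightarrow> bool" where
  "untranslated x \<longleftrightarrow> x \<noteq> [] \<and> hd x > 1 \<and> last x < length x"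

definition Tr :: "nat list set \<Rightarrow> nat \<Rightarrow> (nat list \<times> nat list) set" where
  "Tr C n = \<Inter> {\<Theta>. lattice_cong n \<Theta> \<and>
     (\<forall>g\<in>perms n. join_irreducible g \<and> (\<exists>y\<in>C. is_translate g y) \<longrightarrow> contracts \<Theta> g)}"

definition translational :: "(nat \<Rightarrow> (nat list \<times> nat list) set) \<Rightarrow> bool" where
  "translational \<Theta> \<longleftrightarrow> (\<forall>p q. \<forall>u\<in>perms p. \<forall>u'\<in>perms p. \<forall>v\<in>perms q. \<forall>v'\<in>perms q.
     (u \<otimes> v, u' \<otimes> v') \<in> \<Theta> (p + q) \<longleftrightarrow> (u, u') \<in> \<Theta> p \<and> (v, v') \<in> \<Theta> q)"

end

theory Submission
  imports Defs
begin

definition bef :: "nat list \<Rightarrow> nat \<Rightarrow> nat \<Rightarrow> bool" where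
  "bef w x y \<longleftrightarrow> (\<exists>i j. i < j \<and> j < length w \<and> w!i = x \<and> w!j = y)"

lemma inv_set_bef: "inv_set w = {(a,b). a < b \<and> bef w b a}"
  unfolding inv_set_def bef_def by auto

lemma bef_set: "bef w x y \<Longrightarrow> x \<in> set w \<and> y \<in> set w"
  unfolding bef_def by auto

lemma bef_irrefl: "distinct w \<Longrightarrow> \<not> bef w x x"
proof
  assume d: "distinct w" and "bef w x x"
  then obtain i j where "i < j" "j < length w" "w!i = x" "w!j = x" unfolding bef_def by blast
  then show False using nth_eq_iff_index_eq[OF d, of i j] by simp
qed

lemma bef_trans: "distinct w \<Longrightarrow> bef w x y \<Longrightarrow> bef w y z \<Longrightarrow> bef w x z"
  unfolding bef_def
proof (elim exE conjE)
  fix i j i' j'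
  assume d: "distinct w" and h: "i < j" "j < length w" "w ! i = x" "w ! j = y"
    "i' < j'" "j' < length w" "w ! i' = y" "w ! j' = z"
  then have "j = i'" using nth_eq_iff_index_eq[OF d, of j i'] by auto
  then show "\<exists>i j. i < j \<and> j < length w \<and> w ! i = x \<and> w ! j = z"
    using h by (intro exI[of _ i] exI[of _ j']) auto
qed

lemma bef_total: "x \<in> set w \<Longrightarrow> y \<in> set w \<Longrightarrow> x \<noteq> y \<Longrightarrow> bef w x y \<or> bef w y x"
proof -
  assume "x \<in> set w" "y \<in> set w" "x \<noteq> y"
  then obtain i j where ij: "i < length w" "j < length w" "w!i = x" "w!j = y"
    by (auto simp: in_set_conv_nth)
  then have "i \<noteq> j" using \<open>x \<noteq> y\<close> by auto
  note ij = ij this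
  show ?thesis
  proof (cases "i < j")
    case True then show ?thesis unfolding bef_def using ij by blast
  next
    case False then have "j < i" using ij by simp
    then show ?thesis unfolding bef_def using ij by blast
  qed
qed

lemma bef_asym: "distinct w \<Longrightarrow> bef w x y \<Longrightarrow> \<not> bef w y x"
  using bef_trans[of w x y x] bef_irrefl[of w x] by blast

lemma bef_take: "distinct w \<Longrightarrow> i < length w \<Longrightarrow> {u. bef w u (w!i)} = set (take i w)"
proof -
  assume d: "distinct w" and i: "i < length w"
  show ?thesis
  proof safe
    fix u assume "bef w u (w!i)"
    then obtain a j where "a < j" "j < length w" "w!a = u" "w!j = w!i" unfolding bef_def by auto
    then have "j = i" using nth_eq_iff_index_eq[OF d, of j i] i by simp
    then have "a < length (take i w)" "take i w ! a = u" using \<open>a<j\<close> \<open>w!a = u\<close> i by auto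
    then show "u \<in> set (take i w)" by (metis nth_mem)
  next
    fix u assume "u \<in> set (take i w)"
    then obtain a where "a < length (take i w)" "take i w ! a = u" by (auto simp: in_set_conv_nth)
    then show "bef w u (w!i)" unfolding bef_def using i by (intro exI[of _ a] exI[of _ i]) auto
  qed
qed

lemma card_bef: "distinct w \<Longrightarrow> i < length w \<Longrightarrow> card {u. bef w u (w!i)} = i"
  using bef_take[of w i] distinct_card[of "take i w"] by simp

lemma list_eq_bef:
  assumes dx: "distinct x" and dy: "distinct y" and s: "set x = set y"
    and b: "\<And>u v. bef x u v \<longleftrightarrow> bef y u v"
  shows "x = y"
proof -
  have len: "length x = length y" using distinct_card[OF dx] distinct_card[OF dy] s by simp
  show ?thesis
  proof (rule nth_equalityI[OF len])
    fix i assume i: "i < length x"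
    have "x!i \<in> set y" using s i nth_mem[OF i] by blast
    then obtain j where j: "j < length y" "y!j = x!i" by (metis in_set_conv_nth)
    have "card {u. bef x u (x!i)} = i" using card_bef[OF dx i] .
    moreover have "card {u. bef y u (y!j)} = j" using card_bef[OF dy j(1)] .
    moreover have "{u. bef x u (x!i)} = {u. bef y u (y!j)}" using b j by simp
    ultimately have "i = j" by simp
    then show "x!i = y!i" using j by simp
  qed
qed


definition Pairs :: "nat \<Rightarrow> (nat \<times> nat) set" where
  "Pairs n = {(a,b). 1 \<le> a \<and> a < b \<and> b \<le> n}"

lemma finite_Pairs: "finite (Pairs n)"
  by (rule finite_subset[of _ "{1..n} \<times> {1..n}"]) (auto simp: Pairs_def)

lemma trans_Pairs: "trans (Pairs n)"
  unfolding trans_def Pairs_def by auto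

definition tcc :: "nat \<Rightarrow> (nat \<times> nat) set \<Rightarrow> bool" where
  "tcc n I \<longleftrightarrow> I \<subseteq> Pairs n \<and> trans I \<and> trans (Pairs n - I)"

lemma perms_length: "w \<in> perms n \<Longrightarrow> length w = n"
  by (simp add: perms_def)

lemma bef_perm_iff:
  assumes w: "w \<in> perms n"
  shows "bef w u v \<longleftrightarrow> u \<in> {1..n} \<and> v \<in> {1..n} \<and>
     ((v < u \<and> (v,u) \<in> inv_set w) \<or> (u < v \<and> (u,v) \<notin> inv_set w))"
proof -
  have d: "distinct w" and s: "set w = {1..n}" using w by (auto simp: perms_def)
  have iv: "\<And>a b. (a,b) \<in> inv_set w \<longleftrightarrow> a < b \<and> bef w b a" unfolding inv_set_bef by simp
  show ?thesis
  proof
    assume b: "bef w u v"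
    then have uv: "u \<in> {1..n}" "v \<in> {1..n}" using bef_set[of w u v] s by auto
    have "u \<noteq> v" using b bef_irrefl[OF d] by blast
    then have "v < u \<or> u < v" by arith
    moreover have "\<not> bef w v u" using bef_asym[OF d b] .
    ultimately show "u \<in> {1..n} \<and> v \<in> {1..n} \<and>
     ((v < u \<and> (v,u) \<in> inv_set w) \<or> (u < v \<and> (u,v) \<notin> inv_set w))"
    proof (cases "v < u")
      case True then show ?thesis using uv b iv[of v u] by simp
    next
      case False then have "u < v" using \<open>u \<noteq> v\<close> by simp
      then show ?thesis using uv iv[of u v] \<open>\<not> bef w v u\<close> by simp
    qed
  next
    assume h: "u \<in> {1..n} \<and> v \<in> {1..n} \<and>
     ((v < u \<and> (v,u) \<in> inv_set w) \<or> (u < v \<and> (u,v) \<notin> inv_set w))"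
    show "bef w u v"
    proof (cases "v < u")
      case True then show ?thesis using h iv[of v u] by simp
    next
      case False
      then have "u < v" using h by auto
      then have "\<not> bef w v u" using h iv[of u v] by simp
      note this \<open>u < v\<close>
      moreover have "u \<in> set w" "v \<in> set w" using h s by auto
      ultimately show ?thesis using bef_total[of u w v] by auto
    qed
  qed
qed


lemma inv_inj:
  assumes x: "x \<in> perms n" and y: "y \<in> perms n" and e: "inv_set x = inv_set y"
  shows "x = y"
proof (rule list_eq_bef)
  show "distinct x" "distinct y" "set x = set y" using x y by (auto simp: perms_def)
  show "bef x u v = bef y u v" for u v
    unfolding bef_perm_iff[OF x] bef_perm_iff[OF y] e ..
qed

lemma tcc_inv:
  assumes w: "w \<in> perms n"
  shows "tcc n (inv_set w)"
proof -
  have d: "distinct w" and s: "set w = {1..n}" using w by (auto simp: perms_def)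
  have sub: "inv_set w \<subseteq> Pairs n"
  proof
    fix p assume "p \<in> inv_set w"
    then obtain a b where p: "p = (a,b)" "a < b" "bef w b a" unfolding inv_set_bef by blast
    then have "a \<in> {1..n}" "b \<in> {1..n}" using bef_set[of w b a] s by auto
    then show "p \<in> Pairs n" using p by (auto simp: Pairs_def)
  qed
  have t1: "trans (inv_set w)"
  proof (rule transI)
    fix a b c assume "(a,b) \<in> inv_set w" "(b,c) \<in> inv_set w"
    then have "a < b" "b < c" "bef w b a" "bef w c b" unfolding inv_set_bef by auto
    then have "a < c" "bef w c a" using bef_trans[OF d, of c b a] by auto
    then show "(a,c) \<in> inv_set w" unfolding inv_set_bef by simp
  qed
  have t2: "trans (Pairs n - inv_set w)"
    unfolding trans_def
  proof (intro allI impI)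
    fix a b c assume h: "(a, b) \<in> Pairs n - inv_set w" "(b, c) \<in> Pairs n - inv_set w"
    have hab: "1 \<le> a" "a < b" "b \<le> n" "(a,b) \<notin> inv_set w" using h(1) by (auto simp: Pairs_def)
    have hbc: "1 \<le> b" "b < c" "c \<le> n" "(b,c) \<notin> inv_set w" using h(2) by (auto simp: Pairs_def)
    have "bef w a b" unfolding bef_perm_iff[OF w, of a b] using hab hbc by simp
    moreover have "bef w b c" unfolding bef_perm_iff[OF w, of b c] using hab hbc by simp
    ultimately have "bef w a c" using bef_trans[OF d] by blast
    then have "\<not> bef w c a" using bef_asym[OF d] by blast
    moreover have "a < c" "(a,c) \<in> Pairs n" using hab hbc by (auto simp: Pairs_def)
    ultimately show "(a, c) \<in> Pairs n - inv_set w"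
      unfolding inv_set_bef by simp
  qed
  show ?thesis using sub t1 t2 by (simp add: tcc_def)
qed

definition Rr :: "(nat \<times> nat) set \<Rightarrow> nat \<Rightarrow> nat \<Rightarrow> bool" where
  "Rr I b a \<longleftrightarrow> (a < b \<and> (a,b) \<in> I) \<or> (b < a \<and> (b,a) \<notin> I)"

lemma Rr_trans:
  assumes t: "tcc n I" and abc: "a \<in> {1..n}" "b \<in> {1..n}" "c \<in> {1..n}"
    and h1: "Rr I c b" and h2: "Rr I b a"
  shows "Rr I c a"
proof -
  have TI: "\<And>x y z. (x,y)\<in>I \<Longrightarrow> (y,z)\<in>I \<Longrightarrow> (x,z)\<in>I"
    using t unfolding tcc_def by (meson transD)
  have TN0: "\<And>x y z. (x,y) \<in> Pairs n - I \<Longrightarrow> (y,z) \<in> Pairs n - I \<Longrightarrow> (x,z) \<in> Pairs n - I"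
    using t unfolding tcc_def by (meson transD)
  have TN: "\<And>x y z. x \<in> {1..n} \<Longrightarrow> z \<in> {1..n} \<Longrightarrow> x < y \<Longrightarrow> y < z \<Longrightarrow> (x,y)\<notin>I \<Longrightarrow> (y,z)\<notin>I \<Longrightarrow> (x,z)\<notin>I"
  proof -
    fix x y z assume "x \<in> {1..n}" "z \<in> {1..n}" "x < y" "y < z" "(x,y)\<notin>I" "(y,z)\<notin>I"
    then have "(x,y) \<in> Pairs n - I" "(y,z) \<in> Pairs n - I" by (auto simp: Pairs_def)
    then show "(x,z)\<notin>I" using TN0 by blast
  qed
  show ?thesis
  proof (cases "a < b")
    case ab: True
    show ?thesis
    proof (cases "b < c")
      case True
      then show ?thesis using ab h1 h2 TI[of a b c] unfolding Rr_def by auto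
    next
      case False
      then have "c < b" using h1 unfolding Rr_def by auto
      then have cb: "(c,b) \<notin> I" "(a,b) \<in> I" using h1 h2 ab unfolding Rr_def by auto
      show ?thesis
      proof (cases "a < c")
        case True
        have "(a,c) \<in> I"
        proof (rule ccontr)
          assume ac: "(a,c) \<notin> I"
          have "(a,c) \<in> Pairs n - I" "(c,b) \<in> Pairs n - I" using ac abc cb \<open>c < b\<close> True by (auto simp: Pairs_def)
          then have "(a,b) \<notin> I" using TN0 by blast
          then show False using cb by simp
        qed
        then show ?thesis using True unfolding Rr_def by auto
      next
        case False
        then have "c < a \<or> c = a" by auto
        then show ?thesis
        proof
          assume "c < a" then show ?thesis using TI[of c a b] cb unfolding Rr_def by auto
        next
          assume "c = a" then show ?thesis using cb by simp
        qed
      qed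
    qed
  next
    case False
    then have ba: "b < a" using h2 unfolding Rr_def by auto
    then have bai: "(b,a) \<notin> I" using h2 unfolding Rr_def by auto
    show ?thesis
    proof (cases "b < c")
      case bc: True
      then have bci: "(b,c) \<in> I" using h1 unfolding Rr_def by auto
      show ?thesis
      proof (cases "a < c")
        case True
        have "(a,c) \<in> I"
        proof (rule ccontr)
          assume ac: "(a,c) \<notin> I"
          have "(b,a) \<in> Pairs n - I" "(a,c) \<in> Pairs n - I" using ac abc bai ba True by (auto simp: Pairs_def)
          then have "(b,c) \<notin> I" using TN0 by blast
          then show False using bci by simp
        qed
        then show ?thesis using True unfolding Rr_def by auto
      next
        case False
        then have "c < a \<or> c = a" by auto
        then show ?thesis
        proof
          assume "c < a" then show ?thesis using TI[of b c a] bai bci unfolding Rr_def by auto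
        next
          assume "c = a" then show ?thesis using bai bci by simp
        qed
      qed
    next
      case False
      then have "c < b" using h1 unfolding Rr_def by auto
      then have "(c,b) \<notin> I" using h1 unfolding Rr_def by auto
      then have "(c,b) \<in> Pairs n - I" "(b,a) \<in> Pairs n - I" using abc bai ba \<open>c < b\<close> by (auto simp: Pairs_def)
      then have "(c,a) \<notin> I" using TN0 by blast
      then show ?thesis using ba \<open>c < b\<close> unfolding Rr_def by auto
    qed
  qed
qed

lemma Rr_irrefl: "\<not> Rr I a a" unfolding Rr_def by auto
lemma Rr_total: "a \<noteq> b \<Longrightarrow> Rr I a b \<or> Rr I b a" unfolding Rr_def by auto
lemma Rr_asym: "Rr I a b \<Longrightarrow> \<not> Rr I b a" unfolding Rr_def by auto

definition key :: "nat \<Rightarrow> (nat \<times> nat) set \<Rightarrow> nat \<Rightarrow> nat" where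
  "key n I b = card {c \<in> {1..n}. Rr I c b}"

lemma key_less:
  assumes t: "tcc n I" and a: "a \<in> {1..n}" and b: "b \<in> {1..n}" and r: "Rr I b a"
  shows "key n I b < key n I a"
proof -
  have "{c \<in> {1..n}. Rr I c b} \<subset> {c \<in> {1..n}. Rr I c a}"
  proof
    show "{c \<in> {1..n}. Rr I c b} \<subseteq> {c \<in> {1..n}. Rr I c a}"
      using Rr_trans[OF t a b _ _ r] by blast
    show "{c \<in> {1..n}. Rr I c b} \<noteq> {c \<in> {1..n}. Rr I c a}"
      using b r Rr_irrefl[of I b] by blast
  qed
  then show ?thesis unfolding key_def by (rule psubset_card_mono[rotated]) simp
qed

lemma key_less_iff:
  assumes t: "tcc n I" and a: "a \<in> {1..n}" and b: "b \<in> {1..n}"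
  shows "key n I b < key n I a \<longleftrightarrow> Rr I b a"
proof
  assume k: "key n I b < key n I a"
  show "Rr I b a"
  proof (rule ccontr)
    assume "\<not> Rr I b a"
    moreover have "a \<noteq> b" using k by auto
    ultimately have "Rr I a b" using Rr_total by blast
    then show False using key_less[OF t b a] k by simp
  qed
qed (rule key_less[OF t a b])

lemma realize:
  assumes t: "tcc n I"
  shows "\<exists>w \<in> perms n. inv_set w = I"
proof -
  define w where "w = sort_key (key n I) [1..<n+1]"
  have sw: "set w = {1..n}" unfolding w_def by auto
  have dw: "distinct w" unfolding w_def by simp
  have lw: "length w = n" unfolding w_def by simp
  have srt: "sorted (map (key n I) w)" unfolding w_def by (rule sorted_sort_key)
  have kinj: "\<And>a b. a \<in> {1..n} \<Longrightarrow> b \<in> {1..n} \<Longrightarrow> a \<noteq> b \<Longrightarrow> key n I a \<noteq> key n I b"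
  proof -
    fix a b assume a: "a \<in> {1..n}" and b: "b \<in> {1..n}" and ne: "a \<noteq> b"
    from Rr_total[OF ne, of I] show "key n I a \<noteq> key n I b"
    proof
      assume "Rr I a b" then show ?thesis using key_less[OF t b a] by simp
    next
      assume "Rr I b a" then show ?thesis using key_less[OF t a b] by simp
    qed
  qed
  have befw: "bef w b a \<longleftrightarrow> a \<in> {1..n} \<and> b \<in> {1..n} \<and> key n I b < key n I a" for a b
  proof
    assume "bef w b a"
    then obtain i j where ij: "i < j" "j < length w" "w!i = b" "w!j = a" unfolding bef_def by blast
    have "w!i \<in> set w" "w!j \<in> set w" using ij by auto
    then have ab: "a \<in> {1..n}" "b \<in> {1..n}" using ij sw by auto
    have "a \<noteq> b" using ij nth_eq_iff_index_eq[OF dw, of i j] by simp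
    moreover have "key n I b \<le> key n I a"
      using sorted_nth_mono[OF srt, of i j] ij by simp
    ultimately show "a \<in> {1..n} \<and> b \<in> {1..n} \<and> key n I b < key n I a"
      using kinj[OF ab] ab by (simp add: order_le_neq_trans)
  next
    assume h: "a \<in> {1..n} \<and> b \<in> {1..n} \<and> key n I b < key n I a"
    then have "a \<in> set w" "b \<in> set w" using sw by auto
    then obtain i j where ij: "i < n" "j < n" "w!i = b" "w!j = a"
      using lw by (auto simp: in_set_conv_nth)
    have "i < j"
    proof (rule ccontr)
      assume "\<not> i < j"
      then have "j \<le> i" by simp
      then have "key n I a \<le> key n I b" using sorted_nth_mono[OF srt, of j i] ij lw by simp
      then show False using h by simp
    qed
    then show "bef w b a" unfolding bef_def using ij lw by blast
  qed
  have "inv_set w = I"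
  proof (rule set_eqI, clarify)
    fix a b
    show "(a,b) \<in> inv_set w \<longleftrightarrow> (a,b) \<in> I"
    proof
      assume "(a,b) \<in> inv_set w"
      then have "a < b" "a \<in> {1..n}" "b \<in> {1..n}" "key n I b < key n I a"
        unfolding inv_set_bef befw by auto
      then have "Rr I b a" "a < b" using key_less_iff[OF t] by auto
      then show "(a,b) \<in> I" unfolding Rr_def by auto
    next
      assume ab: "(a,b) \<in> I"
      then have "(a,b) \<in> Pairs n" using t unfolding tcc_def by auto
      then have r: "a < b" "a \<in> {1..n}" "b \<in> {1..n}" by (auto simp: Pairs_def)
      then have "Rr I b a" using ab unfolding Rr_def by auto
      then have "key n I b < key n I a" using key_less_iff[OF t r(2) r(3)] by simp
      then show "(a,b) \<in> inv_set w" unfolding inv_set_bef befw using r by simp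
    qed
  qed
  moreover have "w \<in> perms n" using sw dw lw by (simp add: perms_def)
  ultimately show ?thesis by blast
qed

definition pof :: "nat \<Rightarrow> (nat \<times> nat) set \<Rightarrow> nat list" where
  "pof n I = (THE w. w \<in> perms n \<and> inv_set w = I)"

lemma pof:
  assumes "tcc n I"
  shows "pof n I \<in> perms n" "inv_set (pof n I) = I"
proof -
  obtain w where w: "w \<in> perms n" "inv_set w = I" using realize[OF assms] by blast
  have "pof n I = w" unfolding pof_def
    using w inv_inj by (intro the_equality) auto
  then show "pof n I \<in> perms n" "inv_set (pof n I) = I" using w by auto
qed

lemma pof_inv: assumes w: "w \<in> perms n" shows "pof n (inv_set w) = w"
proof -
  note p = pof[OF tcc_inv[OF w]]
  show ?thesis by (rule inv_inj[OF p(1) w p(2)])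
qed

lemma inv_sub_Pairs: "w \<in> perms n \<Longrightarrow> inv_set w \<subseteq> Pairs n"
  by (drule tcc_inv) (simp add: tcc_def)

lemma trans_inv: "w \<in> perms n \<Longrightarrow> trans (inv_set w)"
  by (drule tcc_inv) (simp add: tcc_def)

lemma trans_ninv: "w \<in> perms n \<Longrightarrow> trans (Pairs n - inv_set w)"
  by (drule tcc_inv) (simp add: tcc_def)

lemma trancl_sub_trans: "r \<subseteq> s \<Longrightarrow> trans s \<Longrightarrow> r\<^sup>+ \<subseteq> s"
proof
  fix p assume r: "r \<subseteq> s" and t: "trans s" and "p \<in> r\<^sup>+"
  then have "p \<in> s\<^sup>+" using trancl_mono by blast
  then show "p \<in> s" using trancl_id[OF t] by simp
qed

lemma trancl_Pairs: "r \<subseteq> Pairs n \<Longrightarrow> r\<^sup>+ \<subseteq> Pairs n"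
  by (rule trancl_sub_trans[OF _ trans_Pairs])

lemma cotrans:
  assumes "A \<subseteq> Pairs n" "trans (Pairs n - A)" "(s,t) \<in> A" "s < m" "m < t"
  shows "(s,m) \<in> A \<or> (m,t) \<in> A"
proof (rule ccontr)
  assume "\<not> ((s,m) \<in> A \<or> (m,t) \<in> A)"
  moreover have "(s,t) \<in> Pairs n" using assms by auto
  ultimately have "(s,m) \<in> Pairs n - A" "(m,t) \<in> Pairs n - A" using assms(4,5) by (auto simp: Pairs_def)
  then have "(s,t) \<in> Pairs n - A" using assms(2) by (meson transD)
  then show False using assms(3) by simp
qed

lemma lemmaG:
  assumes A: "A \<subseteq> Pairs n" "trans (Pairs n - A)" and B: "B \<subseteq> Pairs n" "trans (Pairs n - B)"
  shows "trans (Pairs n - (A \<union> B)\<^sup>+)"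
proof -
  let ?T = "(A \<union> B)\<^sup>+"
  have TP: "?T \<subseteq> Pairs n" using A(1) B(1) by (intro trancl_Pairs Un_least)
  have key: "\<forall>m. s < m \<and> m < t \<longrightarrow> (s,m) \<in> ?T \<or> (m,t) \<in> ?T" if st: "(s,t) \<in> ?T" for s t
    using st
  proof (induction rule: trancl_induct)
    case (base y)
    show ?case
    proof (intro allI impI)
      fix m assume m: "s < m \<and> m < y"
      from base have "(s,y) \<in> A \<or> (s,y) \<in> B" by simp
      then have "(s,m) \<in> A \<union> B \<or> (m,y) \<in> A \<union> B"
        using cotrans[OF A, of s y m] cotrans[OF B, of s y m] m by blast
      then show "(s,m) \<in> ?T \<or> (m,y) \<in> ?T" by blast
    qed
  next
    case (step y z)
    have yz: "y < z" "s < y" using step(1,2) TP A B by (auto simp: Pairs_def)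
    show ?case
    proof (intro allI impI)
      fix m assume m: "s < m \<and> m < z"
      consider "m < y" | "m = y" | "y < m" by arith
      then show "(s,m) \<in> ?T \<or> (m,z) \<in> ?T"
      proof cases
        case 1
        then have "(s,m) \<in> ?T \<or> (m,y) \<in> ?T" using step(3) m by blast
        then show ?thesis using step(2) by (meson trancl_into_trancl)
      next
        case 2 then show ?thesis using step(1) by simp
      next
        case 3
        from step(2) have "(y,z) \<in> A \<or> (y,z) \<in> B" by simp
        then have "(y,m) \<in> A \<union> B \<or> (m,z) \<in> A \<union> B"
          using cotrans[OF A, of y z m] cotrans[OF B, of y z m] m 3 by blast
        then show ?thesis using step(1) by (meson r_into_trancl trancl_into_trancl)
      qed
    qed
  qed
  show ?thesis
  proof (rule transI)
    fix a b c assume h: "(a,b) \<in> Pairs n - ?T" "(b,c) \<in> Pairs n - ?T"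
    then have "a < b" "b < c" "(a,c) \<in> Pairs n" by (auto simp: Pairs_def)
    moreover have "(a,c) \<notin> ?T"
      using key[of a c] h \<open>a < b\<close> \<open>b < c\<close> by blast
    ultimately show "(a,c) \<in> Pairs n - ?T" by simp
  qed
qed

definition Jn :: "nat \<Rightarrow> nat list \<Rightarrow> nat list \<Rightarrow> (nat \<times> nat) set" where
  "Jn n x y = (inv_set x \<union> inv_set y)\<^sup>+"

definition Mt :: "nat \<Rightarrow> nat list \<Rightarrow> nat list \<Rightarrow> (nat \<times> nat) set" where
  "Mt n x y = Pairs n - ((Pairs n - inv_set x) \<union> (Pairs n - inv_set y))\<^sup>+"

lemma tcc_Jn: assumes x: "x \<in> perms n" and y: "y \<in> perms n" shows "tcc n (Jn n x y)"
proof -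
  have "Jn n x y \<subseteq> Pairs n" unfolding Jn_def
    by (intro trancl_Pairs Un_least inv_sub_Pairs x y)
  moreover have "trans (Jn n x y)" unfolding Jn_def by (rule trans_trancl)
  moreover have "trans (Pairs n - Jn n x y)" unfolding Jn_def
    by (rule lemmaG[OF inv_sub_Pairs[OF x] trans_ninv[OF x] inv_sub_Pairs[OF y] trans_ninv[OF y]])
  ultimately show ?thesis by (simp add: tcc_def)
qed

lemma tcc_Mt: assumes x: "x \<in> perms n" and y: "y \<in> perms n" shows "tcc n (Mt n x y)"
proof -
  let ?Nx = "Pairs n - inv_set x" and ?Ny = "Pairs n - inv_set y"
  have ex: "Pairs n - ?Nx = inv_set x" using inv_sub_Pairs[OF x] by blast
  have ey: "Pairs n - ?Ny = inv_set y" using inv_sub_Pairs[OF y] by blast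
  have TP: "(?Nx \<union> ?Ny)\<^sup>+ \<subseteq> Pairs n" by (intro trancl_Pairs) blast
  have "trans (Mt n x y)" unfolding Mt_def
    by (rule lemmaG) (auto simp: ex ey trans_inv[OF x] trans_inv[OF y])
  moreover have "Pairs n - Mt n x y = (?Nx \<union> ?Ny)\<^sup>+" unfolding Mt_def using TP by blast
  moreover have "Mt n x y \<subseteq> Pairs n" unfolding Mt_def by blast
  ultimately show ?thesis by (simp add: tcc_def)
qed

lemma is_join_unique:
  assumes "is_join n x y z1" "is_join n x y z2" shows "z1 = z2"
proof -
  have z: "z1 \<in> perms n" "z2 \<in> perms n" using assms unfolding is_join_def by auto
  have "weak_le z1 z2" "weak_le z2 z1" using assms z unfolding is_join_def by auto
  then have "inv_set z1 = inv_set z2" unfolding weak_le_def by blast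
  then show ?thesis by (rule inv_inj[OF z])
qed

lemma is_meet_unique:
  assumes "is_meet n x y z1" "is_meet n x y z2" shows "z1 = z2"
proof -
  have z: "z1 \<in> perms n" "z2 \<in> perms n" using assms unfolding is_meet_def by auto
  have "weak_le z1 z2" "weak_le z2 z1" using assms z unfolding is_meet_def by auto
  then have "inv_set z1 = inv_set z2" unfolding weak_le_def by blast
  then show ?thesis by (rule inv_inj[OF z])
qed

lemma is_join_Jn:
  assumes x: "x \<in> perms n" and y: "y \<in> perms n"
  shows "is_join n x y (pof n (Jn n x y))"
proof -
  note p = pof[OF tcc_Jn[OF x y]]
  show ?thesis unfolding is_join_def weak_le_def p(2)
  proof (intro conjI ballI impI)
    show "pof n (Jn n x y) \<in> perms n" by (rule p(1))
    show "inv_set x \<subseteq> Jn n x y" "inv_set y \<subseteq> Jn n x y" unfolding Jn_def by auto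
    fix w assume w: "w \<in> perms n" "inv_set x \<subseteq> inv_set w \<and> inv_set y \<subseteq> inv_set w"
    then have "inv_set x \<union> inv_set y \<subseteq> inv_set w" by blast
    then show "Jn n x y \<subseteq> inv_set w" unfolding Jn_def
      by (rule trancl_sub_trans[OF _ trans_inv[OF w(1)]])
  qed
qed

lemma is_meet_Mt:
  assumes x: "x \<in> perms n" and y: "y \<in> perms n"
  shows "is_meet n x y (pof n (Mt n x y))"
proof -
  note p = pof[OF tcc_Mt[OF x y]]
  show ?thesis unfolding is_meet_def weak_le_def p(2)
  proof (intro conjI ballI impI)
    show "pof n (Mt n x y) \<in> perms n" by (rule p(1))
    show "Mt n x y \<subseteq> inv_set x" "Mt n x y \<subseteq> inv_set y" unfolding Mt_def by auto
    fix w assume w: "w \<in> perms n" "inv_set w \<subseteq> inv_set x \<and> inv_set w \<subseteq> inv_set y"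
    have "(Pairs n - inv_set x) \<union> (Pairs n - inv_set y) \<subseteq> Pairs n - inv_set w" using w by blast
    then have "((Pairs n - inv_set x) \<union> (Pairs n - inv_set y))\<^sup>+ \<subseteq> Pairs n - inv_set w"
      by (rule trancl_sub_trans[OF _ trans_ninv[OF w(1)]])
    then show "inv_set w \<subseteq> Mt n x y" unfolding Mt_def using inv_sub_Pairs[OF w(1)] by blast
  qed
qed

lemma wjoin:
  assumes x: "x \<in> perms n" and y: "y \<in> perms n"
  shows "wjoin n x y \<in> perms n" "inv_set (wjoin n x y) = (inv_set x \<union> inv_set y)\<^sup>+"
proof -
  have "wjoin n x y = pof n (Jn n x y)" unfolding wjoin_def
    by (rule the_equality[of "is_join n x y", OF is_join_Jn[OF x y]]) (rule is_join_unique[OF _ is_join_Jn[OF x y]])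
  then show "wjoin n x y \<in> perms n" "inv_set (wjoin n x y) = (inv_set x \<union> inv_set y)\<^sup>+"
    using pof[OF tcc_Jn[OF x y]] by (auto simp: Jn_def)
qed

lemma wmeet:
  assumes x: "x \<in> perms n" and y: "y \<in> perms n"
  shows "wmeet n x y \<in> perms n"
    "inv_set (wmeet n x y) = Pairs n - ((Pairs n - inv_set x) \<union> (Pairs n - inv_set y))\<^sup>+"
proof -
  have "wmeet n x y = pof n (Mt n x y)" unfolding wmeet_def
    by (rule the_equality[of "is_meet n x y", OF is_meet_Mt[OF x y]]) (rule is_meet_unique[OF _ is_meet_Mt[OF x y]])
  then show "wmeet n x y \<in> perms n"
    "inv_set (wmeet n x y) = Pairs n - ((Pairs n - inv_set x) \<union> (Pairs n - inv_set y))\<^sup>+"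
    using pof[OF tcc_Mt[OF x y]] by (auto simp: Mt_def)
qed

lemma wjoin_comm: assumes x: "x \<in> perms n" and y: "y \<in> perms n" shows "wjoin n x y = wjoin n y x"
  by (rule inv_inj[OF wjoin(1)[OF x y] wjoin(1)[OF y x]]) (simp add: wjoin(2)[OF x y] wjoin(2)[OF y x] Un_commute)

lemma wmeet_comm: assumes x: "x \<in> perms n" and y: "y \<in> perms n" shows "wmeet n x y = wmeet n y x"
  by (rule inv_inj[OF wmeet(1)[OF x y] wmeet(1)[OF y x]]) (simp add: wmeet(2)[OF x y] wmeet(2)[OF y x] Un_commute)

lemma wjoin_le: assumes x: "x \<in> perms n" and y: "y \<in> perms n" and le: "weak_le x y"
  shows "wjoin n x y = y" "wjoin n y x = y"
proof -
  have "inv_set x \<union> inv_set y = inv_set y" using le unfolding weak_le_def by blast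
  then have "inv_set (wjoin n x y) = inv_set y" using wjoin(2)[OF x y] trancl_id[OF trans_inv[OF y]] by simp
  then show "wjoin n x y = y" by (rule inv_inj[OF wjoin(1)[OF x y] y])
  then show "wjoin n y x = y" using wjoin_comm[OF x y] by simp
qed

lemma wmeet_le: assumes x: "x \<in> perms n" and y: "y \<in> perms n" and le: "weak_le x y"
  shows "wmeet n x y = x" "wmeet n y x = x"
proof -
  have "(Pairs n - inv_set x) \<union> (Pairs n - inv_set y) = Pairs n - inv_set x"
    using le unfolding weak_le_def by blast
  then have "inv_set (wmeet n x y) = Pairs n - (Pairs n - inv_set x)"
    using wmeet(2)[OF x y] trancl_id[OF trans_ninv[OF x]] by simp
  also have "\<dots> = inv_set x" using inv_sub_Pairs[OF x] by blast
  finally show "wmeet n x y = x" by (rule inv_inj[OF wmeet(1)[OF x y] x])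
  then show "wmeet n y x = x" using wmeet_comm[OF x y] by simp
qed

lemma wjoin_ub: "x \<in> perms n \<Longrightarrow> y \<in> perms n \<Longrightarrow> weak_le x (wjoin n x y) \<and> weak_le y (wjoin n x y)"
  unfolding weak_le_def using wjoin(2) by auto

lemma wjoin_lub: assumes x: "x \<in> perms n" and y: "y \<in> perms n" and "w \<in> perms n" "weak_le x w" "weak_le y w"
  shows "weak_le (wjoin n x y) w"
proof -
  have "inv_set x \<union> inv_set y \<subseteq> inv_set w" using assms unfolding weak_le_def by blast
  then show ?thesis unfolding weak_le_def wjoin(2)[OF x y] by (rule trancl_sub_trans[OF _ trans_inv[OF assms(3)]])
qed

lemma wmeet_lb: assumes x: "x \<in> perms n" and y: "y \<in> perms n" shows "weak_le (wmeet n x y) x \<and> weak_le (wmeet n x y) y"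
proof -
  let ?U = "(Pairs n - inv_set x) \<union> (Pairs n - inv_set y)"
  have "?U \<subseteq> ?U\<^sup>+" by (auto intro: r_into_trancl)
  then have "Pairs n - ?U\<^sup>+ \<subseteq> inv_set x \<inter> inv_set y" by blast
  then show ?thesis unfolding weak_le_def wmeet(2)[OF x y] by blast
qed

definition sh :: "nat \<Rightarrow> (nat \<times> nat) set \<Rightarrow> (nat \<times> nat) set" where
  "sh k I = (\<lambda>(a,b). (a+k, b+k)) ` I"

lemma mem_sh: "(x,y) \<in> sh k I \<longleftrightarrow> k \<le> x \<and> k \<le> y \<and> (x-k, y-k) \<in> I"
proof
  assume "(x,y) \<in> sh k I"
  then obtain a b where "(a,b) \<in> I" "x = a+k" "y = b+k" unfolding sh_def by auto
  then show "k \<le> x \<and> k \<le> y \<and> (x-k, y-k) \<in> I" by simp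
next
  assume h: "k \<le> x \<and> k \<le> y \<and> (x-k, y-k) \<in> I"
  then have "(x,y) = (\<lambda>(a,b). (a+k, b+k)) (x-k,y-k)" by simp
  then show "(x,y) \<in> sh k I" unfolding sh_def using h by blast
qed

lemma sh_mem: "(a,b) \<in> I \<Longrightarrow> (a+k, b+k) \<in> sh k I"
  by (simp add: mem_sh)

lemma sh_0[simp]: "sh 0 I = I" by (auto simp: mem_sh)
lemma sh_empty[simp]: "sh k {} = {}" by (auto simp: sh_def)
lemma sh_union: "sh k (A \<union> B) = sh k A \<union> sh k B" by (auto simp: sh_def)
lemma sh_mono: "A \<subseteq> B \<Longrightarrow> sh k A \<subseteq> sh k B" by (auto simp: sh_def)
lemma sh_inj: "sh k A = sh k B \<Longrightarrow> A = B"
proof (rule set_eqI, clarify)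
  fix a b assume "sh k A = sh k B"
  then have "(a+k, b+k) \<in> sh k A \<longleftrightarrow> (a+k,b+k) \<in> sh k B" by simp
  then show "(a,b) \<in> A \<longleftrightarrow> (a,b) \<in> B" by (simp add: mem_sh)
qed
lemma sh_Pairs: "I \<subseteq> Pairs q \<Longrightarrow> sh p I \<subseteq> {(a,b). p < a \<and> a < b \<and> b \<le> p + q}"
  by (auto simp: sh_def Pairs_def)

lemma bef_append: "bef (xs @ ys) x y \<longleftrightarrow> bef xs x y \<or> bef ys x y \<or> (x \<in> set xs \<and> y \<in> set ys)"
proof
  assume "bef (xs @ ys) x y"
  then obtain i j where ij: "i < j" "j < length (xs@ys)" "(xs@ys)!i = x" "(xs@ys)!j = y"
    unfolding bef_def by blast
  show "bef xs x y \<or> bef ys x y \<or> (x \<in> set xs \<and> y \<in> set ys)"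
  proof (cases "j < length xs")
    case True
    then have "bef xs x y" unfolding bef_def using ij by (intro exI[of _ i] exI[of _ j]) (auto simp: nth_append)
    then show ?thesis by simp
  next
    case jF: False
    show ?thesis
    proof (cases "i < length xs")
      case True
      then have "x \<in> set xs" "y \<in> set ys" using ij jF by (auto simp: nth_append)
      then show ?thesis by simp
    next
      case False
      then have "bef ys x y" unfolding bef_def using ij jF
        by (intro exI[of _ "i - length xs"] exI[of _ "j - length xs"]) (auto simp: nth_append)
      then show ?thesis by simp
    qed
  qed
next
  assume h: "bef xs x y \<or> bef ys x y \<or> (x \<in> set xs \<and> y \<in> set ys)"
  then consider "bef xs x y" | "bef ys x y" | "x \<in> set xs \<and> y \<in> set ys" by blast
  then show "bef (xs @ ys) x y"
  proof cases
    case 1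
    then obtain i j where "i < j" "j < length xs" "xs!i = x" "xs!j = y" unfolding bef_def by blast
    then show ?thesis unfolding bef_def by (intro exI[of _ i] exI[of _ j]) (auto simp: nth_append)
  next
    case 2
    then obtain i j where "i < j" "j < length ys" "ys!i = x" "ys!j = y" unfolding bef_def by blast
    then show ?thesis unfolding bef_def
      by (intro exI[of _ "length xs + i"] exI[of _ "length xs + j"]) (auto simp: nth_append)
  next
    case 3
    then obtain i j where "i < length xs" "xs!i = x" "j < length ys" "ys!j = y"
      by (auto simp: in_set_conv_nth)
    then show ?thesis unfolding bef_def
      by (intro exI[of _ i] exI[of _ "length xs + j"]) (auto simp: nth_append)
  qed
qed

lemma bef_map_add: "bef (map (\<lambda>i. p + i) v) x y \<longleftrightarrow> p \<le> x \<and> p \<le> y \<and> bef v (x - p) (y - p)"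
proof
  assume "bef (map (\<lambda>i. p + i) v) x y"
  then obtain i j where ij: "i < j" "j < length v" "x = p + v!i" "y = p + v!j" unfolding bef_def by auto
  then show "p \<le> x \<and> p \<le> y \<and> bef v (x - p) (y - p)" unfolding bef_def
    by (intro conjI exI[of _ i] exI[of _ j]) auto
next
  assume "p \<le> x \<and> p \<le> y \<and> bef v (x - p) (y - p)"
  then obtain i j where ij: "p \<le> x" "p \<le> y" "i < j" "j < length v" "v!i = x - p" "v!j = y - p" unfolding bef_def by auto
  then show "bef (map (\<lambda>i. p + i) v) x y" unfolding bef_def
    by (intro exI[of _ i] exI[of _ j]) auto
qed

lemma prod_perms:
  assumes u: "u \<in> perms p" and v: "v \<in> perms q"
  shows "u \<otimes> v \<in> perms (p + q)"
proof -
  have lu: "length u = p" using u by (simp add: perms_def)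
  have su: "set u = {1..p}" and sv: "set v = {1..q}" and du: "distinct u" and dv: "distinct v"
    using u v by (auto simp: perms_def)
  have "set (map (\<lambda>i. p + i) v) = {p+1..p+q}" using sv by auto
  moreover have "distinct (map (\<lambda>i. p + i) v)" using dv by (simp add: distinct_map inj_on_def)
  ultimately show ?thesis unfolding perm_prod_def perms_def using su du v lu
    by (auto simp: perms_def)
qed

lemma inv_prod:
  assumes u: "u \<in> perms p" and v: "v \<in> perms q"
  shows "inv_set (u \<otimes> v) = inv_set u \<union> sh p (inv_set v)"
proof -
  have lu: "length u = p" using u by (simp add: perms_def)
  have su: "set u = {1..p}" using u by (simp add: perms_def)
  have sv: "set (map (\<lambda>i. p + i) v) = {p+1..p+q}" using v by (auto simp: perms_def)
  have bu: "bef u b a \<Longrightarrow> b \<le> p" for a b using bef_set[of u b a] su by auto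
  show ?thesis
  proof (rule set_eqI, clarify)
    fix a b
    have L: "(a,b) \<in> inv_set (u \<otimes> v) \<longleftrightarrow> a < b \<and> (bef u b a \<or> (p \<le> a \<and> p \<le> b \<and> bef v (b-p) (a-p)))"
    proof -
      have "(a,b) \<in> inv_set (u \<otimes> v) \<longleftrightarrow> a < b \<and> bef (u \<otimes> v) b a" by (simp add: inv_set_bef)
      also have "\<dots> \<longleftrightarrow> a < b \<and> (bef u b a \<or> (p \<le> b \<and> p \<le> a \<and> bef v (b-p) (a-p)) \<or> (b \<in> {1..p} \<and> a \<in> {p+1..p+q}))"
        unfolding perm_prod_def lu bef_append bef_map_add su sv ..
      also have "\<dots> \<longleftrightarrow> a < b \<and> (bef u b a \<or> (p \<le> a \<and> p \<le> b \<and> bef v (b-p) (a-p)))"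
        by auto
      finally show ?thesis .
    qed
    have R1: "(a,b) \<in> inv_set u \<longleftrightarrow> a < b \<and> bef u b a" by (simp add: inv_set_bef)
    have R2: "(a,b) \<in> sh p (inv_set v) \<longleftrightarrow> p \<le> a \<and> p \<le> b \<and> a - p < b - p \<and> bef v (b-p) (a-p)"
      by (simp add: mem_sh inv_set_bef)
    show "(a,b) \<in> inv_set (u \<otimes> v) \<longleftrightarrow> (a,b) \<in> inv_set u \<union> sh p (inv_set v)"
      unfolding Un_iff L R1 R2 by auto
  qed
qed

lemma ident_perms: "ident k \<in> perms k"
  by (auto simp: ident_def perms_def)

lemma inv_ident: "inv_set (ident k) = {}"
proof -
  have "\<not> (a < b \<and> bef (ident k) b a)" for a b
  proof
    assume "a < b \<and> bef (ident k) b a"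
    then obtain i j where "a < b" "i < j" "j < length (ident k)" "ident k ! i = b" "ident k ! j = a"
      unfolding bef_def by blast
    moreover have "ident k ! i = 1 + i" "ident k ! j = 1 + j" using calculation
      unfolding ident_def by (simp_all del: upt_Suc add: nth_upt)
    ultimately show False by simp
  qed
  then show ?thesis unfolding inv_set_bef by auto
qed

lemma length_prod: "length (u \<otimes> v) = length u + length v"
  by (simp add: perm_prod_def)

lemma prod_assoc: "(a \<otimes> b) \<otimes> c = a \<otimes> (b \<otimes> c)"
  by (simp add: perm_prod_def length_prod add.assoc)

lemma prod_Nil1[simp]: "[] \<otimes> v = v" by (simp add: perm_prod_def)
lemma prod_Nil2[simp]: "u \<otimes> [] = u" by (simp add: perm_prod_def)
lemma ident_0[simp]: "ident 0 = []" by (simp add: ident_def)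

lemma ident_prod: "ident a \<otimes> ident b = ident (a + b)"
  by (rule inv_inj[OF prod_perms[OF ident_perms ident_perms] ident_perms])
     (simp add: inv_prod[OF ident_perms ident_perms] inv_ident)

lemma hd_ident_prod: "1 \<le> c \<Longrightarrow> hd (ident c \<otimes> v) = 1"
  by (cases c) (auto simp: ident_def perm_prod_def upt_rec)

lemma last_prod_ident: "1 \<le> d \<Longrightarrow> last (u \<otimes> ident d) = length u + d"
  by (cases d) (auto simp: ident_def perm_prod_def)

definition rs :: "nat \<Rightarrow> nat \<Rightarrow> (nat \<times> nat) set \<Rightarrow> (nat \<times> nat) set" where
  "rs l m I = {(a,b). (a,b) \<in> Pairs (m - l) \<and> (a+l, b+l) \<in> I}"

lemma rs_union: "rs l m (A \<union> B) = rs l m A \<union> rs l m B" by (auto simp: rs_def)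
lemma rs_mono: "A \<subseteq> B \<Longrightarrow> rs l m A \<subseteq> rs l m B" by (auto simp: rs_def)
lemma rs_Pairs: "rs l m I \<subseteq> Pairs (m - l)" by (auto simp: rs_def)
lemma rs_diff: "l \<le> m \<Longrightarrow> m \<le> n \<Longrightarrow> rs l m (Pairs n - I) = Pairs (m - l) - rs l m I"
  by (auto simp: rs_def Pairs_def)

lemma rs_trancl:
  assumes W: "W \<subseteq> Pairs n" and lm: "l \<le> m" "m \<le> n"
  shows "rs l m (W\<^sup>+) = (rs l m W)\<^sup>+"
proof
  show "(rs l m W)\<^sup>+ \<subseteq> rs l m (W\<^sup>+)"
  proof (clarify)
    fix a0 b0 assume "(a0,b0) \<in> (rs l m W)\<^sup>+"
    then show "(a0,b0) \<in> rs l m (W\<^sup>+)"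
    proof (induction rule: trancl_induct)
      case (base y)
      then show ?case by (auto simp: rs_def)
    next
      case (step y z)
      then show ?case unfolding rs_def Pairs_def
        by (auto intro: trancl.trancl_into_trancl)
    qed
  qed
next
  have WP: "W\<^sup>+ \<subseteq> Pairs n" using trancl_Pairs[OF W] .
  have main: "l < s \<longrightarrow> t \<le> m \<longrightarrow> (s - l, t - l) \<in> (rs l m W)\<^sup>+" if st: "(s,t) \<in> W\<^sup>+" for s t
    using st
  proof (induction rule: trancl_induct)
    case (base y)
    then have "(s,y) \<in> Pairs n" using W by auto
    then show ?case using base by (auto simp: rs_def Pairs_def intro!: r_into_trancl)
  next
    case (step y z)
    have "(s,y) \<in> Pairs n" "(y,z) \<in> Pairs n" using step(1,2) W WP by auto
    then have syz: "s < y" "y < z" by (auto simp: Pairs_def)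
    show ?case
    proof (intro impI)
      assume "l < s" "z \<le> m"
      then have "(s - l, y - l) \<in> (rs l m W)\<^sup>+" using step(3) syz by simp
      moreover have "(y - l, z - l) \<in> rs l m W" using step(2) syz \<open>l < s\<close> \<open>z \<le> m\<close>
        by (auto simp: rs_def Pairs_def)
      ultimately show "(s - l, z - l) \<in> (rs l m W)\<^sup>+" by (rule trancl.trancl_into_trancl)
    qed
  qed
  show "rs l m (W\<^sup>+) \<subseteq> (rs l m W)\<^sup>+"
  proof (clarify)
    fix a b assume "(a,b) \<in> rs l m (W\<^sup>+)"
    then have "(a+l, b+l) \<in> W\<^sup>+" "1 \<le> a" "b \<le> m - l" by (auto simp: rs_def Pairs_def)
    moreover have "b + l \<le> m" using \<open>b \<le> m - l\<close> lm by arith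
    ultimately show "(a,b) \<in> (rs l m W)\<^sup>+" using main[of "a+l" "b+l"] by simp
  qed
qed

lemma tcc_rs:
  assumes t: "tcc n I" and lm: "l \<le> m" "m \<le> n"
  shows "tcc (m - l) (rs l m I)"
proof -
  have I: "I \<subseteq> Pairs n" "trans I" "trans (Pairs n - I)" using t by (auto simp: tcc_def)
  have "trans (rs l m I)"
  proof (rule transI)
    fix a b c assume "(a,b) \<in> rs l m I" "(b,c) \<in> rs l m I"
    then show "(a,c) \<in> rs l m I" using I(2) unfolding rs_def Pairs_def by (auto dest: transD)
  qed
  moreover have "trans (Pairs (m - l) - rs l m I)"
    unfolding rs_diff[OF lm, symmetric]
  proof (rule transI)
    fix a b c assume "(a,b) \<in> rs l m (Pairs n - I)" "(b,c) \<in> rs l m (Pairs n - I)"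
    then have h: "(a+l,b+l) \<in> Pairs n - I" "(b+l,c+l) \<in> Pairs n - I" "(a,b) \<in> Pairs (m-l)" "(b,c) \<in> Pairs (m-l)"
      unfolding rs_def by auto
    have "(a+l,c+l) \<in> Pairs n - I" using transD[OF I(3) h(1,2)] .
    moreover have "(a,c) \<in> Pairs (m-l)" using h(3,4) by (auto simp: Pairs_def)
    ultimately show "(a,c) \<in> rs l m (Pairs n - I)" unfolding rs_def by simp
  qed
  ultimately show ?thesis using rs_Pairs by (simp add: tcc_def)
qed

definition restr :: "nat \<Rightarrow> nat \<Rightarrow> nat list \<Rightarrow> nat list" where
  "restr l m w = pof (m - l) (rs l m (inv_set w))"

lemma restr:
  assumes w: "w \<in> perms n" and lm: "l \<le> m" "m \<le> n"
  shows "restr l m w \<in> perms (m - l)" "inv_set (restr l m w) = rs l m (inv_set w)"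
  using pof[OF tcc_rs[OF tcc_inv[OF w] lm]] unfolding restr_def by auto

lemma restr_join:
  assumes x: "x \<in> perms n" and z: "z \<in> perms n" and lm: "l \<le> m" "m \<le> n"
  shows "restr l m (wjoin n x z) = wjoin (m - l) (restr l m x) (restr l m z)"
proof (rule inv_inj[OF restr(1)[OF wjoin(1)[OF x z] lm] wjoin(1)[OF restr(1)[OF x lm] restr(1)[OF z lm]]])
  have U: "inv_set x \<union> inv_set z \<subseteq> Pairs n" using inv_sub_Pairs[OF x] inv_sub_Pairs[OF z] by blast
  show "inv_set (restr l m (wjoin n x z)) = inv_set (wjoin (m - l) (restr l m x) (restr l m z))"
    unfolding restr(2)[OF wjoin(1)[OF x z] lm] wjoin(2)[OF x z]
      wjoin(2)[OF restr(1)[OF x lm] restr(1)[OF z lm]] restr(2)[OF x lm] restr(2)[OF z lm]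
      rs_trancl[OF U lm] rs_union ..
qed

lemma restr_meet:
  assumes x: "x \<in> perms n" and z: "z \<in> perms n" and lm: "l \<le> m" "m \<le> n"
  shows "restr l m (wmeet n x z) = wmeet (m - l) (restr l m x) (restr l m z)"
proof (rule inv_inj[OF restr(1)[OF wmeet(1)[OF x z] lm] wmeet(1)[OF restr(1)[OF x lm] restr(1)[OF z lm]]])
  have U: "(Pairs n - inv_set x) \<union> (Pairs n - inv_set z) \<subseteq> Pairs n" by blast
  show "inv_set (restr l m (wmeet n x z)) = inv_set (wmeet (m - l) (restr l m x) (restr l m z))"
    unfolding restr(2)[OF wmeet(1)[OF x z] lm] wmeet(2)[OF x z]
      wmeet(2)[OF restr(1)[OF x lm] restr(1)[OF z lm]] restr(2)[OF x lm] restr(2)[OF z lm]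
      rs_diff[OF lm] rs_trancl[OF U lm] rs_union ..
qed

definition blk :: "nat \<Rightarrow> nat \<Rightarrow> (nat \<times> nat) set" where
  "blk n c = {(a,b). (a,b) \<in> Pairs n \<and> (b \<le> c \<or> c < a)}"

lemma rs_blk:
  assumes I: "I \<subseteq> Pairs n" and c: "c \<le> n"
  shows "rs 0 c I \<union> sh c (rs c n I) = I \<inter> blk n c"
proof (rule set_eqI, clarify)
  fix a b
  show "(a,b) \<in> rs 0 c I \<union> sh c (rs c n I) \<longleftrightarrow> (a,b) \<in> I \<inter> blk n c"
  proof
    assume "(a,b) \<in> rs 0 c I \<union> sh c (rs c n I)"
    then show "(a,b) \<in> I \<inter> blk n c" using c by (auto simp: rs_def mem_sh blk_def Pairs_def)
  next
    assume h: "(a,b) \<in> I \<inter> blk n c"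
    then have p: "(a,b) \<in> Pairs n" "b \<le> c \<or> c < a" using I by (auto simp: blk_def)
    show "(a,b) \<in> rs 0 c I \<union> sh c (rs c n I)"
    proof (cases "b \<le> c")
      case True then show ?thesis using h p by (auto simp: rs_def Pairs_def)
    next
      case False then have "c < a" using p by simp
      then show ?thesis using h p by (auto simp: rs_def Pairs_def mem_sh)
    qed
  qed
qed

lemma inv_prod_blk:
  assumes u: "u \<in> perms p" and v: "v \<in> perms q"
  shows "inv_set (u \<otimes> v) \<subseteq> blk (p+q) p"
  using inv_sub_Pairs[OF u] sh_Pairs[OF inv_sub_Pairs[OF v], of p]
  unfolding inv_prod[OF u v] blk_def Pairs_def by auto

lemma restr_prod:
  assumes u: "u \<in> perms p" and v: "v \<in> perms q"
  shows "restr 0 p (u \<otimes> v) = u" "restr p (p+q) (u \<otimes> v) = v"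
proof -
  have uv: "u \<otimes> v \<in> perms (p+q)" by (rule prod_perms[OF u v])
  have "rs 0 p (inv_set (u \<otimes> v)) = inv_set u"
    unfolding inv_prod[OF u v] using inv_sub_Pairs[OF u] sh_Pairs[OF inv_sub_Pairs[OF v], of p]
    by (auto simp: rs_def Pairs_def)
  moreover have "restr 0 p (u \<otimes> v) \<in> perms p" using restr(1)[OF uv, of 0 p] by simp
  moreover have "inv_set (restr 0 p (u \<otimes> v)) = rs 0 p (inv_set (u \<otimes> v))" using restr(2)[OF uv, of 0 p] by simp
  ultimately show "restr 0 p (u \<otimes> v) = u" using inv_inj[OF _ u] by simp
  have "rs p (p+q) (inv_set (u \<otimes> v)) = inv_set v"
    unfolding inv_prod[OF u v] using inv_sub_Pairs[OF u] inv_sub_Pairs[OF v]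
    by (auto simp: rs_def Pairs_def mem_sh)
  moreover have "restr p (p+q) (u \<otimes> v) \<in> perms q" using restr(1)[OF uv, of p "p+q"] by simp
  moreover have "inv_set (restr p (p+q) (u \<otimes> v)) = rs p (p+q) (inv_set (u \<otimes> v))" using restr(2)[OF uv, of p "p+q"] by simp
  ultimately show "restr p (p+q) (u \<otimes> v) = v" using inv_inj[OF _ v] by simp
qed

lemma prod_split:
  assumes w: "w \<in> perms n" and c: "c \<le> n" and b: "inv_set w \<subseteq> blk n c"
  shows "w = restr 0 c w \<otimes> restr c n w"
proof -
  have r1: "restr 0 c w \<in> perms c" using restr(1)[OF w, of 0 c] c by simp
  have r2: "restr c n w \<in> perms (n - c)" using restr(1)[OF w, of c n] c by simp
  have pp: "restr 0 c w \<otimes> restr c n w \<in> perms n" using prod_perms[OF r1 r2] c by simp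
  have "inv_set (restr 0 c w \<otimes> restr c n w) = inv_set w"
    unfolding inv_prod[OF r1 r2] restr(2)[OF w, of 0 c, simplified, OF c] restr(2)[OF w, of c n, OF c order.refl]
      rs_blk[OF inv_sub_Pairs[OF w] c] using b by blast
  then show ?thesis using inv_inj[OF w pp] by simp
qed

lemma prod_inj:
  assumes "u \<in> perms p" "u' \<in> perms p" "v \<in> perms q" "v' \<in> perms q" "u \<otimes> v = u' \<otimes> v'"
  shows "u = u' \<and> v = v'"
proof -
  have "u = restr 0 p (u \<otimes> v)" "v = restr p (p+q) (u \<otimes> v)" using restr_prod[OF assms(1,3)] by simp_all
  moreover have "u' = restr 0 p (u' \<otimes> v')" "v' = restr p (p+q) (u' \<otimes> v')" using restr_prod[OF assms(2,4)] by simp_all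
  ultimately show ?thesis using assms(5) by simp
qed

lemma rs_prod:
  assumes u: "u \<in> perms p" and v: "v \<in> perms q"
  shows "rs 0 p (inv_set (u \<otimes> v)) = inv_set u" "rs p (p+q) (inv_set (u \<otimes> v)) = inv_set v"
  unfolding inv_prod[OF u v] using inv_sub_Pairs[OF u] inv_sub_Pairs[OF v] sh_Pairs[OF inv_sub_Pairs[OF v], of p]
  by (auto simp: rs_def Pairs_def mem_sh)

lemma prod_le:
  assumes a: "a \<in> perms p" and b: "b \<in> perms q" and a': "a' \<in> perms p" and b': "b' \<in> perms q"
  shows "weak_le (a \<otimes> b) (a' \<otimes> b') \<longleftrightarrow> weak_le a a' \<and> weak_le b b'"
proof
  assume "weak_le (a \<otimes> b) (a' \<otimes> b')"
  then have h: "inv_set (a \<otimes> b) \<subseteq> inv_set (a' \<otimes> b')" by (simp add: weak_le_def)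
  show "weak_le a a' \<and> weak_le b b'"
    using rs_mono[OF h, of 0 p] rs_mono[OF h, of p "p+q"] rs_prod[OF a b] rs_prod[OF a' b']
    by (simp add: weak_le_def)
next
  assume "weak_le a a' \<and> weak_le b b'"
  then show "weak_le (a \<otimes> b) (a' \<otimes> b')"
    unfolding weak_le_def inv_prod[OF a b] inv_prod[OF a' b'] using sh_mono by blast
qed

lemma prod_eq:
  assumes "a \<in> perms p" "b \<in> perms q" "a' \<in> perms p" "b' \<in> perms q"
  shows "a \<otimes> b = a' \<otimes> b' \<longleftrightarrow> a = a' \<and> b = b'"
  using prod_inj[OF assms(1,3,2,4)] by blast

lemma below_prod:
  assumes w: "w \<in> perms (p+q)" and a: "a \<in> perms p" and b: "b \<in> perms q" and le: "weak_le w (a \<otimes> b)"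
  shows "\<exists>w1\<in>perms p. \<exists>w2\<in>perms q. w = w1 \<otimes> w2"
proof -
  have "inv_set w \<subseteq> blk (p+q) p" using le inv_prod_blk[OF a b] by (auto simp: weak_le_def)
  then have "w = restr 0 p w \<otimes> restr p (p+q) w" using prod_split[OF w, of p] by simp
  moreover have "restr 0 p w \<in> perms p" "restr p (p+q) w \<in> perms q"
    using restr(1)[OF w, of 0 p] restr(1)[OF w, of p "p+q"] by simp_all
  ultimately show ?thesis by blast
qed

lemma weak_less_iff: "weak_less x y \<longleftrightarrow> weak_le x y \<and> x \<noteq> y" by (simp add: weak_less_def)

lemma weak_le_refl: "weak_le x x" by (simp add: weak_le_def)
lemma weak_le_trans: "weak_le x y \<Longrightarrow> weak_le y z \<Longrightarrow> weak_le x z" by (auto simp: weak_le_def)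
lemma weak_le_antisym: "x \<in> perms n \<Longrightarrow> y \<in> perms n \<Longrightarrow> weak_le x y \<Longrightarrow> weak_le y x \<Longrightarrow> x = y"
  using inv_inj by (auto simp: weak_le_def)

lemma covers_perm:
  assumes "y \<in> perms n"
  shows "covers x y \<longleftrightarrow> weak_less x y \<and> \<not> (\<exists>z\<in>perms n. weak_less x z \<and> weak_less z y)"
  using assms by (simp add: covers_def perms_length)

lemma cov_prod:
  assumes a: "a \<in> perms p" and b: "b \<in> perms q" and x: "x \<in> perms (p+q)"
  shows "covers x (a \<otimes> b) \<longleftrightarrow> (\<exists>a'\<in>perms p. covers a' a \<and> x = a' \<otimes> b) \<or> (\<exists>b'\<in>perms q. covers b' b \<and> x = a \<otimes> b')"
proof
  assume c: "covers x (a \<otimes> b)"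
  have ab: "a \<otimes> b \<in> perms (p+q)" by (rule prod_perms[OF a b])
  note c' = c[unfolded covers_perm[OF ab]]
  obtain x1 x2 where x12: "x1 \<in> perms p" "x2 \<in> perms q" "x = x1 \<otimes> x2"
    using below_prod[OF x a b] c' by (auto simp: weak_less_def)
  have le: "weak_le x1 a" "weak_le x2 b" using c' x12 prod_le[OF x12(1,2) a b] by (auto simp: weak_less_def)
  have ne: "x1 \<noteq> a \<or> x2 \<noteq> b" using c' x12 by (auto simp: weak_less_def)
  show "(\<exists>a'\<in>perms p. covers a' a \<and> x = a' \<otimes> b) \<or> (\<exists>b'\<in>perms q. covers b' b \<and> x = a \<otimes> b')"
  proof (cases "x1 = a")
    case True
    then have "x2 \<noteq> b" using ne by simp
    have "covers x2 b" unfolding covers_perm[OF b]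
    proof (intro conjI notI)
      show "weak_less x2 b" using le \<open>x2 \<noteq> b\<close> by (simp add: weak_less_def)
      assume "\<exists>z\<in>perms q. weak_less x2 z \<and> weak_less z b"
      then obtain z where z: "z \<in> perms q" "weak_less x2 z" "weak_less z b" by blast
      have "a \<otimes> z \<in> perms (p+q)" using prod_perms[OF a z(1)] .
      moreover have "weak_less x (a \<otimes> z)" "weak_less (a \<otimes> z) (a \<otimes> b)"
        using z x12 True prod_le[OF a x12(2) a z(1)] prod_le[OF a z(1) a b] prod_eq[OF a x12(2) a z(1)]
          prod_eq[OF a z(1) a b] by (auto simp: weak_less_def weak_le_refl)
      ultimately show False using c' by blast
    qed
    then show ?thesis using x12 True by blast
  next
    case False
    have x2b: "x2 = b"
    proof (rule ccontr)
      assume "x2 \<noteq> b"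
      have "x1 \<otimes> b \<in> perms (p+q)" using prod_perms[OF x12(1) b] .
      moreover have "weak_less x (x1 \<otimes> b)" "weak_less (x1 \<otimes> b) (a \<otimes> b)"
        using le x12 False \<open>x2 \<noteq> b\<close> prod_le[OF x12(1,2) x12(1) b] prod_le[OF x12(1) b a b]
          prod_eq[OF x12(1,2) x12(1) b] prod_eq[OF x12(1) b a b] by (auto simp: weak_less_def weak_le_refl)
      ultimately show False using c' by blast
    qed
    have "covers x1 a" unfolding covers_perm[OF a]
    proof (intro conjI notI)
      show "weak_less x1 a" using le False by (simp add: weak_less_def)
      assume "\<exists>z\<in>perms p. weak_less x1 z \<and> weak_less z a"
      then obtain z where z: "z \<in> perms p" "weak_less x1 z" "weak_less z a" by blast
      have "z \<otimes> b \<in> perms (p+q)" using prod_perms[OF z(1) b] .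
      moreover have "weak_less x (z \<otimes> b)" "weak_less (z \<otimes> b) (a \<otimes> b)"
        using z x12 x2b prod_le[OF x12(1) b z(1) b] prod_le[OF z(1) b a b] prod_eq[OF x12(1) b z(1) b]
          prod_eq[OF z(1) b a b] by (auto simp: weak_less_def weak_le_refl)
      ultimately show False using c' by blast
    qed
    then show ?thesis using x12 x2b by blast
  qed
next
  have ab: "a \<otimes> b \<in> perms (p+q)" by (rule prod_perms[OF a b])
  assume "(\<exists>a'\<in>perms p. covers a' a \<and> x = a' \<otimes> b) \<or> (\<exists>b'\<in>perms q. covers b' b \<and> x = a \<otimes> b')"
  then show "covers x (a \<otimes> b)"
  proof
    assume "\<exists>a'\<in>perms p. covers a' a \<and> x = a' \<otimes> b"
    then obtain a' where a': "a' \<in> perms p" "covers a' a" "x = a' \<otimes> b" by blast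
    note ca = a'(2)[unfolded covers_perm[OF a]]
    show ?thesis unfolding covers_perm[OF ab]
    proof (intro conjI notI)
      show "weak_less x (a \<otimes> b)" using ca a' prod_le[OF a'(1) b a b] prod_eq[OF a'(1) b a b]
        by (auto simp: weak_less_def weak_le_refl)
      assume "\<exists>z\<in>perms (p+q). weak_less x z \<and> weak_less z (a \<otimes> b)"
      then obtain z where z: "z \<in> perms (p+q)" "weak_less x z" "weak_less z (a \<otimes> b)" by blast
      obtain z1 z2 where z12: "z1 \<in> perms p" "z2 \<in> perms q" "z = z1 \<otimes> z2"
        using below_prod[OF z(1) a b] z(3) by (auto simp: weak_less_def)
      have "weak_le b z2" "weak_le z2 b" "weak_le a' z1" "weak_le z1 a"
        using z z12 a' prod_le[OF a'(1) b z12(1,2)] prod_le[OF z12(1,2) a b] by (auto simp: weak_less_def)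
      then have "z2 = b" using weak_le_antisym[OF z12(2) b] by simp
      then have "weak_less a' z1" "weak_less z1 a" using z z12 a' \<open>weak_le a' z1\<close> \<open>weak_le z1 a\<close>
        by (auto simp: weak_less_def)
      then show False using ca z12(1) by blast
    qed
  next
    assume "\<exists>b'\<in>perms q. covers b' b \<and> x = a \<otimes> b'"
    then obtain b' where b': "b' \<in> perms q" "covers b' b" "x = a \<otimes> b'" by blast
    note cb = b'(2)[unfolded covers_perm[OF b]]
    show ?thesis unfolding covers_perm[OF ab]
    proof (intro conjI notI)
      show "weak_less x (a \<otimes> b)" using cb b' prod_le[OF a b'(1) a b] prod_eq[OF a b'(1) a b]
        by (auto simp: weak_less_def weak_le_refl)
      assume "\<exists>z\<in>perms (p+q). weak_less x z \<and> weak_less z (a \<otimes> b)"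
      then obtain z where z: "z \<in> perms (p+q)" "weak_less x z" "weak_less z (a \<otimes> b)" by blast
      obtain z1 z2 where z12: "z1 \<in> perms p" "z2 \<in> perms q" "z = z1 \<otimes> z2"
        using below_prod[OF z(1) a b] z(3) by (auto simp: weak_less_def)
      have "weak_le a z1" "weak_le z1 a" "weak_le b' z2" "weak_le z2 b"
        using z z12 b' prod_le[OF a b'(1) z12(1,2)] prod_le[OF z12(1,2) a b] by (auto simp: weak_less_def)
      then have "z1 = a" using weak_le_antisym[OF z12(1) a] by simp
      then have "weak_less b' z2" "weak_less z2 b" using z z12 b' \<open>weak_le b' z2\<close> \<open>weak_le z2 b\<close>
        by (auto simp: weak_less_def)
      then show False using cb z12(2) by blast
    qed
  qed
qed

lemma cover_exists:
  assumes z: "z \<in> perms n" and j: "j \<in> perms n" and lt: "weak_less z j"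
  shows "\<exists>x\<in>perms n. weak_le z x \<and> covers x j"
proof -
  let ?P = "\<lambda>x. x \<in> perms n \<and> weak_le z x \<and> weak_less x j"
  have Pz: "?P z" using z lt by (simp add: weak_le_refl)
  have bnd: "\<forall>y. ?P y \<longrightarrow> card (inv_set y) < card (Pairs n) + 1"
  proof (intro allI impI)
    fix y assume "?P y"
    then have "card (inv_set y) \<le> card (Pairs n)" using card_mono[OF finite_Pairs inv_sub_Pairs] by blast
    then show "card (inv_set y) < card (Pairs n) + 1" by simp
  qed
  obtain x where x: "?P x" and mx: "\<forall>y. ?P y \<longrightarrow> card (inv_set y) \<le> card (inv_set x)"
    using ex_has_greatest_nat[of ?P z "\<lambda>y. card (inv_set y)", OF Pz bnd] by blast
  have "covers x j" unfolding covers_perm[OF j]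
  proof (intro conjI notI)
    show "weak_less x j" using x by simp
    assume "\<exists>w\<in>perms n. weak_less x w \<and> weak_less w j"
    then obtain w where w: "w \<in> perms n" "weak_less x w" "weak_less w j" by blast
    have "weak_le z w" using x w(2) weak_le_trans[of z x w] by (simp add: weak_less_def)
    then have Pw: "?P w" using w by simp
    have "inv_set x \<subseteq> inv_set w" "inv_set x \<noteq> inv_set w"
      using w x inv_inj[of x n w] by (auto simp: weak_less_def weak_le_def)
    then have "inv_set x \<subset> inv_set w" by blast
    then have "card (inv_set x) < card (inv_set w)"
      by (rule psubset_card_mono[OF finite_subset[OF inv_sub_Pairs[OF w(1)] finite_Pairs]])
    moreover have "card (inv_set w) \<le> card (inv_set x)" using mx Pw by blast
    ultimately show False by simp
  qed
  then show ?thesis using x by blast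
qed

lemma JI_perm: "join_irreducible g \<Longrightarrow> g \<in> perms (length g)"
  by (simp add: join_irreducible_def)

lemma JI_lc: assumes "join_irreducible g"
  shows "lower_cover g \<in> perms (length g)" "covers (lower_cover g) g"
proof -
  have "\<exists>!x. x \<in> perms (length g) \<and> covers x g" using assms by (simp add: join_irreducible_def)
  from theI'[OF this] show "lower_cover g \<in> perms (length g)" "covers (lower_cover g) g"
    unfolding lower_cover_def by auto
qed

lemma JI_unique: assumes "join_irreducible g" "x \<in> perms (length g)" "covers x g"
  shows "x = lower_cover g"
proof -
  have "\<exists>!x. x \<in> perms (length g) \<and> covers x g" using assms by (simp add: join_irreducible_def)
  then show ?thesis using JI_lc[OF assms(1)] assms(2,3) by blast
qed

lemma below_JI:
  assumes J: "join_irreducible j" and z: "z \<in> perms (length j)" and lt: "weak_less z j"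
  shows "weak_le z (lower_cover j)"
proof -
  obtain x where "x \<in> perms (length j)" "weak_le z x" "covers x j"
    using cover_exists[OF z JI_perm[OF J] lt] by blast
  then show ?thesis using JI_unique[OF J] by metis
qed

lemma lc_less: assumes J: "join_irreducible g" shows "weak_less (lower_cover g) g"
  using JI_lc(2)[OF J] by (simp add: covers_def)

lemma JI_iff: "g \<in> perms n \<Longrightarrow> join_irreducible g \<longleftrightarrow> (\<exists>!x. x \<in> perms n \<and> covers x g)"
  by (simp add: join_irreducible_def perms_length)

lemma no_cover_ident: "x \<in> perms k \<Longrightarrow> \<not> covers x (ident k)"
proof
  assume x: "x \<in> perms k" and "covers x (ident k)"
  then have "inv_set x \<subseteq> {}" "x \<noteq> ident k" by (auto simp: covers_def weak_less_def weak_le_def inv_ident)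
  then show False using inv_inj[OF x ident_perms] inv_ident by auto
qed

lemma cov_left_ident:
  assumes y: "y \<in> perms k" and x: "x \<in> perms (a+k)"
  shows "covers x (ident a \<otimes> y) \<longleftrightarrow> (\<exists>y'\<in>perms k. covers y' y \<and> x = ident a \<otimes> y')"
  using cov_prod[OF ident_perms y x] no_cover_ident by blast

lemma cov_right_ident:
  assumes y: "y \<in> perms k" and x: "x \<in> perms (k+b)"
  shows "covers x (y \<otimes> ident b) \<longleftrightarrow> (\<exists>y'\<in>perms k. covers y' y \<and> x = y' \<otimes> ident b)"
  using cov_prod[OF y ident_perms x] no_cover_ident by blast

lemma JI_left:
  assumes y: "y \<in> perms k"
  shows "join_irreducible (ident a \<otimes> y) \<longleftrightarrow> join_irreducible y"
    "join_irreducible y \<Longrightarrow> lower_cover (ident a \<otimes> y) = ident a \<otimes> lower_cover y"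
proof -
  have g: "ident a \<otimes> y \<in> perms (a+k)" by (rule prod_perms[OF ident_perms y])
  have eq: "\<And>y1 y2. y1 \<in> perms k \<Longrightarrow> y2 \<in> perms k \<Longrightarrow> ident a \<otimes> y1 = ident a \<otimes> y2 \<longleftrightarrow> y1 = y2"
    using prod_eq[OF ident_perms _ ident_perms] by blast
  have cl: "\<And>y'. y' \<in> perms k \<Longrightarrow> covers y' y \<Longrightarrow> covers (ident a \<otimes> y') (ident a \<otimes> y)"
    using cov_left_ident[OF y] prod_perms[OF ident_perms] by blast
  show "join_irreducible (ident a \<otimes> y) \<longleftrightarrow> join_irreducible y"
  proof
    assume J: "join_irreducible (ident a \<otimes> y)"
    obtain x where x: "x \<in> perms (a+k)" "covers x (ident a \<otimes> y)"
      using JI_lc[OF J] g by (auto simp: perms_length[OF g])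
    obtain y' where y': "y' \<in> perms k" "covers y' y" "x = ident a \<otimes> y'" using cov_left_ident[OF y x(1)] x(2) by blast
    have "\<exists>!y'. y' \<in> perms k \<and> covers y' y"
    proof (rule ex1I[of _ y'])
      show "y' \<in> perms k \<and> covers y' y" using y' by simp
      fix y'' assume "y'' \<in> perms k \<and> covers y'' y"
      then have "ident a \<otimes> y'' = lower_cover (ident a \<otimes> y)" "ident a \<otimes> y' = lower_cover (ident a \<otimes> y)"
        using JI_unique[OF J] cl y' prod_perms[OF ident_perms] by (auto simp: perms_length[OF g])
      then show "y'' = y'" using eq \<open>y'' \<in> perms k \<and> covers y'' y\<close> y' by metis
    qed
    then show "join_irreducible y" using JI_iff[OF y] by simp
  next
    assume J: "join_irreducible y"
    have l: "lower_cover y \<in> perms k" "covers (lower_cover y) y" using JI_lc[OF J] perms_length[OF y] by auto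
    have "\<exists>!x. x \<in> perms (a+k) \<and> covers x (ident a \<otimes> y)"
    proof (rule ex1I[of _ "ident a \<otimes> lower_cover y"])
      show "ident a \<otimes> lower_cover y \<in> perms (a+k) \<and> covers (ident a \<otimes> lower_cover y) (ident a \<otimes> y)"
        using l cl prod_perms[OF ident_perms l(1)] by blast
      fix x assume "x \<in> perms (a+k) \<and> covers x (ident a \<otimes> y)"
      then obtain y' where "y' \<in> perms k" "covers y' y" "x = ident a \<otimes> y'" using cov_left_ident[OF y] by blast
      then show "x = ident a \<otimes> lower_cover y" using JI_unique[OF J] perms_length[OF y] by auto
    qed
    then show "join_irreducible (ident a \<otimes> y)" using JI_iff[OF g] by simp
  qed
  assume J: "join_irreducible y"
  have l: "lower_cover y \<in> perms k" "covers (lower_cover y) y" using JI_lc[OF J] perms_length[OF y] by auto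
  have J': "join_irreducible (ident a \<otimes> y)" using J \<open>join_irreducible (ident a \<otimes> y) \<longleftrightarrow> join_irreducible y\<close> by simp
  show "lower_cover (ident a \<otimes> y) = ident a \<otimes> lower_cover y"
    using JI_unique[OF J', of "ident a \<otimes> lower_cover y"] cl[OF l] prod_perms[OF ident_perms l(1)]
    by (simp add: perms_length[OF g])
qed

lemma JI_right:
  assumes y: "y \<in> perms k"
  shows "join_irreducible (y \<otimes> ident b) \<longleftrightarrow> join_irreducible y"
    "join_irreducible y \<Longrightarrow> lower_cover (y \<otimes> ident b) = lower_cover y \<otimes> ident b"
proof -
  have g: "y \<otimes> ident b \<in> perms (k+b)" by (rule prod_perms[OF y ident_perms])
  have eq: "\<And>y1 y2. y1 \<in> perms k \<Longrightarrow> y2 \<in> perms k \<Longrightarrow> y1 \<otimes> ident b = y2 \<otimes> ident b \<longleftrightarrow> y1 = y2"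
    using prod_eq[OF _ ident_perms _ ident_perms] by blast
  have cl: "\<And>y'. y' \<in> perms k \<Longrightarrow> covers y' y \<Longrightarrow> covers (y' \<otimes> ident b) (y \<otimes> ident b)"
    using cov_right_ident[OF y] prod_perms[OF _ ident_perms] by blast
  show "join_irreducible (y \<otimes> ident b) \<longleftrightarrow> join_irreducible y"
  proof
    assume J: "join_irreducible (y \<otimes> ident b)"
    obtain x where x: "x \<in> perms (k+b)" "covers x (y \<otimes> ident b)"
      using JI_lc[OF J] g by (auto simp: perms_length[OF g])
    obtain y' where y': "y' \<in> perms k" "covers y' y" "x = y' \<otimes> ident b" using cov_right_ident[OF y x(1)] x(2) by blast
    have "\<exists>!y'. y' \<in> perms k \<and> covers y' y"
    proof (rule ex1I[of _ y'])
      show "y' \<in> perms k \<and> covers y' y" using y' by simp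
      fix y'' assume "y'' \<in> perms k \<and> covers y'' y"
      then have "y'' \<otimes> ident b = lower_cover (y \<otimes> ident b)" "y' \<otimes> ident b = lower_cover (y \<otimes> ident b)"
        using JI_unique[OF J] cl y' prod_perms[OF _ ident_perms] by (auto simp: perms_length[OF g])
      then show "y'' = y'" using eq \<open>y'' \<in> perms k \<and> covers y'' y\<close> y' by metis
    qed
    then show "join_irreducible y" using JI_iff[OF y] by simp
  next
    assume J: "join_irreducible y"
    have l: "lower_cover y \<in> perms k" "covers (lower_cover y) y" using JI_lc[OF J] perms_length[OF y] by auto
    have "\<exists>!x. x \<in> perms (k+b) \<and> covers x (y \<otimes> ident b)"
    proof (rule ex1I[of _ "lower_cover y \<otimes> ident b"])
      show "lower_cover y \<otimes> ident b \<in> perms (k+b) \<and> covers (lower_cover y \<otimes> ident b) (y \<otimes> ident b)"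
        using l cl prod_perms[OF l(1) ident_perms] by blast
      fix x assume "x \<in> perms (k+b) \<and> covers x (y \<otimes> ident b)"
      then obtain y' where "y' \<in> perms k" "covers y' y" "x = y' \<otimes> ident b" using cov_right_ident[OF y] by blast
      then show "x = lower_cover y \<otimes> ident b" using JI_unique[OF J] perms_length[OF y] by auto
    qed
    then show "join_irreducible (y \<otimes> ident b)" using JI_iff[OF g] by simp
  qed
  assume J: "join_irreducible y"
  have l: "lower_cover y \<in> perms k" "covers (lower_cover y) y" using JI_lc[OF J] perms_length[OF y] by auto
  have J': "join_irreducible (y \<otimes> ident b)" using J \<open>join_irreducible (y \<otimes> ident b) \<longleftrightarrow> join_irreducible y\<close> by simp
  show "lower_cover (y \<otimes> ident b) = lower_cover y \<otimes> ident b"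
    using JI_unique[OF J', of "lower_cover y \<otimes> ident b"] cl[OF l] prod_perms[OF l(1) ident_perms]
    by (simp add: perms_length[OF g])
qed

lemma JI_trans:
  assumes y: "y \<in> perms k"
  shows "join_irreducible (ident a \<otimes> y \<otimes> ident b) \<longleftrightarrow> join_irreducible y"
    "join_irreducible y \<Longrightarrow> lower_cover (ident a \<otimes> y \<otimes> ident b) = ident a \<otimes> lower_cover y \<otimes> ident b"
  using JI_left[OF y] JI_right[OF prod_perms[OF ident_perms y]] by simp_all

lemma perms1: "x \<in> perms 1 \<Longrightarrow> x = ident 1"
proof -
  assume x: "x \<in> perms 1"
  have "Pairs 1 = {}" by (auto simp: Pairs_def)
  then have "inv_set x = {}" using inv_sub_Pairs[OF x] by blast
  then show ?thesis using inv_inj[OF x ident_perms] inv_ident by simp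
qed

lemma hd_blk:
  assumes g: "g \<in> perms n" and n: "1 \<le> n" and h: "hd g = 1"
  shows "inv_set g \<subseteq> blk n 1"
proof
  fix p assume p: "p \<in> inv_set g"
  then obtain a b where ab: "p = (a,b)" "a < b" "bef g b a" unfolding inv_set_bef by blast
  have d: "distinct g" and l: "length g = n" using g by (auto simp: perms_def)
  have "g \<noteq> []" using l n by auto
  then have g0: "g ! 0 = 1" using h by (simp add: hd_conv_nth[symmetric])
  have "a \<noteq> 1"
  proof
    assume "a = 1"
    then obtain i j where "i < j" "j < n" "g!j = 1" using ab(3) l unfolding bef_def by blast
    then show False using nth_eq_iff_index_eq[OF d, of j 0] g0 l n by simp
  qed
  moreover have "p \<in> Pairs n" using p inv_sub_Pairs[OF g] by blast
  ultimately show "p \<in> blk n 1" using ab by (auto simp: blk_def Pairs_def)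
qed

lemma last_blk:
  assumes g: "g \<in> perms n" and n: "1 \<le> n" and h: "last g = n"
  shows "inv_set g \<subseteq> blk n (n - 1)"
proof
  fix p assume p: "p \<in> inv_set g"
  then obtain a b where ab: "p = (a,b)" "a < b" "bef g b a" unfolding inv_set_bef by blast
  have d: "distinct g" and l: "length g = n" using g by (auto simp: perms_def)
  have "g \<noteq> []" using l n by auto
  have "g ! (length g - 1) = n" using h unfolding last_conv_nth[OF \<open>g \<noteq> []\<close>] .
  then have g0: "g ! (n - 1) = n" unfolding l .
  have "b \<noteq> n"
  proof
    assume "b = n"
    then have "bef g n a" using ab(3) by simp
    then obtain i j where ij: "i < j" "j < length g" "g!i = n" unfolding bef_def by blast
    have il: "i < length g" "n - 1 < length g" using ij l n by auto
    have "g!i = g!(n - 1)" using ij(3) g0 by simp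
    then have "i = n - 1" using nth_eq_iff_index_eq[OF d il] by blast
    then show False using ij l by arith
  qed
  moreover have "p \<in> Pairs n" using p inv_sub_Pairs[OF g] by blast
  ultimately have "(a,b) \<in> Pairs n" "b \<le> n - 1" using ab by (auto simp: Pairs_def)
  then show "p \<in> blk n (n - 1)" using ab by (simp add: blk_def)
qed

lemma JI_form:
  "g \<in> perms n \<Longrightarrow> join_irreducible g \<Longrightarrow>
     \<exists>p q y. g = ident p \<otimes> y \<otimes> ident q \<and> join_irreducible y \<and> untranslated y"
proof (induction n arbitrary: g rule: less_induct)
  case (less n)
  note g = less.prems(1) and J = less.prems(2)
  have l: "length g = n" using g by (simp add: perms_def)
  have sg: "set g = {1..n}" using g by (simp add: perms_def)
  have n1: "1 \<le> n"
  proof (rule ccontr)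
    assume "\<not> 1 \<le> n"
    then have "n = 0" by simp
    then have "g = []" using l by simp
    then show False using lc_less[OF J] JI_lc(1)[OF J] by (auto simp: weak_less_def weak_le_def perms_def)
  qed
  show ?case
  proof (cases "untranslated g")
    case True
    then show ?thesis using J by (intro exI[of _ 0] exI[of _ 0] exI[of _ g]) simp
  next
    case False
    have gne: "g \<noteq> []" using l n1 by auto
    have "hd g \<in> {1..n}" "last g \<in> {1..n}" using gne sg by auto
    then have "hd g = 1 \<or> last g = n" using False gne l by (auto simp: untranslated_def)
    then show ?thesis
    proof
      assume h: "hd g = 1"
      have sp: "g = restr 0 1 g \<otimes> restr 1 n g" using prod_split[OF g n1 hd_blk[OF g n1 h]] .
      have r1: "restr 0 1 g = ident 1" using perms1 restr(1)[OF g, of 0 1] n1 by simp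
      have r2: "restr 1 n g \<in> perms (n - 1)" using restr(1)[OF g, of 1 n] n1 by simp
      have "join_irreducible (ident 1 \<otimes> restr 1 n g)" using J sp r1 by simp
      then have J2: "join_irreducible (restr 1 n g)" using JI_left(1)[OF r2] by simp
      obtain p q y where pqy: "restr 1 n g = ident p \<otimes> y \<otimes> ident q" "join_irreducible y" "untranslated y"
        using less.IH[OF _ r2 J2] n1 by auto
      have "g = ident 1 \<otimes> (ident p \<otimes> y \<otimes> ident q)" using sp r1 pqy by simp
      also have "\<dots> = ident (1 + p) \<otimes> y \<otimes> ident q" unfolding ident_prod[of 1 p, symmetric] prod_assoc ..
      finally show ?thesis using pqy by blast
    next
      assume h: "last g = n"
      have sp: "g = restr 0 (n - 1) g \<otimes> restr (n - 1) n g" using prod_split[OF g _ last_blk[OF g n1 h]] by simp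
      have r1: "restr (n - 1) n g = ident 1" using perms1 restr(1)[OF g, of "n - 1" n] n1 by simp
      have r2: "restr 0 (n - 1) g \<in> perms (n - 1)" using restr(1)[OF g, of 0 "n - 1"] by simp
      have "join_irreducible (restr 0 (n - 1) g \<otimes> ident 1)" using J sp r1 by simp
      then have J2: "join_irreducible (restr 0 (n - 1) g)" using JI_right(1)[OF r2] by simp
      obtain p q y where pqy: "restr 0 (n - 1) g = ident p \<otimes> y \<otimes> ident q" "join_irreducible y" "untranslated y"
        using less.IH[OF _ r2 J2] n1 by auto
      have "g = (ident p \<otimes> y \<otimes> ident q) \<otimes> ident 1" using sp r1 pqy by simp
      also have "\<dots> = ident p \<otimes> y \<otimes> ident (q + 1)" unfolding ident_prod[of q 1, symmetric] prod_assoc ..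
      finally show ?thesis using pqy by blast
    qed
  qed
qed

lemma straddle_blk:
  assumes y: "y \<in> perms k" and J: "join_irreducible y" and U: "untranslated y"
    and c: "0 < c" "c < k"
  shows "(inv_set y - inv_set (lower_cover y)) \<inter> blk k c = {}"
proof -
  let ?u = "restr 0 c y" and ?v = "restr c k y"
  have u: "?u \<in> perms c" using restr(1)[OF y, of 0 c] c by simp
  have v: "?v \<in> perms (k - c)" using restr(1)[OF y, of c k] c by simp
  have kc: "c + (k - c) = k" using c by simp
  have z: "?u \<otimes> ?v \<in> perms k" using prod_perms[OF u v] kc by simp
  have i1: "inv_set ?u = rs 0 c (inv_set y)" using restr(2)[OF y, of 0 c] c by simp
  have i2: "inv_set ?v = rs c k (inv_set y)" using restr(2)[OF y, of c k] c by simp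
  have iz: "inv_set (?u \<otimes> ?v) = inv_set y \<inter> blk k c"
    unfolding inv_prod[OF u v] i1 i2
    using rs_blk[OF inv_sub_Pairs[OF y], of c] c by (simp add: less_imp_le)
  have ly: "length y = k" using y by (simp add: perms_def)
  show ?thesis
  proof (cases "?u \<otimes> ?v = y")
    case True
    have "?u \<noteq> ident c"
    proof
      assume "?u = ident c"
      then have "hd y = 1" using True hd_ident_prod[of c ?v] c by simp
      then show False using U by (simp add: untranslated_def)
    qed
    then have "weak_less (ident c) ?u"
      by (simp add: weak_less_def weak_le_def inv_ident)
    then obtain u' where u': "u' \<in> perms c" "covers u' ?u"
      using cover_exists[OF ident_perms u] by blast
    have "?v \<noteq> ident (k - c)"
    proof
      assume "?v = ident (k - c)"
      then have "last y = k" using True last_prod_ident[of "k - c" ?u] c perms_length[OF u] by simp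
      then show False using U ly by (simp add: untranslated_def)
    qed
    then have "weak_less (ident (k - c)) ?v"
      by (simp add: weak_less_def weak_le_def inv_ident)
    then obtain v' where v': "v' \<in> perms (k - c)" "covers v' ?v"
      using cover_exists[OF ident_perms v] by blast
    have c1: "covers (u' \<otimes> ?v) y" using cov_prod[OF u v, of "u' \<otimes> ?v"] prod_perms[OF u'(1) v] u' True by auto
    have c2: "covers (?u \<otimes> v') y" using cov_prod[OF u v, of "?u \<otimes> v'"] prod_perms[OF u v'(1)] v' True by auto
    have "u' \<otimes> ?v = lower_cover y" using JI_unique[OF J _ c1] prod_perms[OF u'(1) v] kc ly by simp
    moreover have "?u \<otimes> v' = lower_cover y" using JI_unique[OF J _ c2] prod_perms[OF u v'(1)] kc ly by simp
    ultimately have "u' = ?u" using prod_eq[OF u'(1) v u v'(1)] by simp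
    then show ?thesis using u'(2) by (simp add: covers_def weak_less_def)
  next
    case False
    then have "weak_less (?u \<otimes> ?v) y" using iz by (simp add: weak_less_def weak_le_def)
    then have "weak_le (?u \<otimes> ?v) (lower_cover y)" using below_JI[OF J] z ly by simp
    then show ?thesis using iz by (auto simp: weak_le_def)
  qed
qed

lemma straddle:
  assumes y: "y \<in> perms k" and J: "join_irreducible y" and U: "untranslated y"
  shows "inv_set y - inv_set (lower_cover y) \<subseteq> {(1, k)}"
proof
  fix p assume p: "p \<in> inv_set y - inv_set (lower_cover y)"
  obtain a b where ab0: "p = (a,b)" by (cases p)
  then have ab: "p = (a,b)" "(a,b) \<in> Pairs k" using p inv_sub_Pairs[OF y] by auto
  have "b = k"
  proof (rule ccontr)
    assume "b \<noteq> k"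
    then have "0 < b" "b < k" "(a,b) \<in> blk k b" using ab by (auto simp: Pairs_def blk_def)
    then show False using straddle_blk[OF y J U, of b] p ab by blast
  qed
  moreover have "a = 1"
  proof (rule ccontr)
    assume "a \<noteq> 1"
    then have "0 < a - 1" "a - 1 < k" "(a,b) \<in> blk k (a - 1)" using ab by (auto simp: Pairs_def blk_def)
    then show False using straddle_blk[OF y J U, of "a - 1"] p ab by blast
  qed
  ultimately show "p \<in> {(1,k)}" using ab by simp
qed

lemma lc_sub: "lattice_cong n T \<Longrightarrow> (x,y) \<in> T \<Longrightarrow> x \<in> perms n \<and> y \<in> perms n"
  unfolding lattice_cong_def equiv_def refl_on_def by blast

lemma lc_refl: "lattice_cong n T \<Longrightarrow> x \<in> perms n \<Longrightarrow> (x,x) \<in> T"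
  unfolding lattice_cong_def equiv_def refl_on_def by blast

lemma lc_sym: "lattice_cong n T \<Longrightarrow> (x,y) \<in> T \<Longrightarrow> (y,x) \<in> T"
  unfolding lattice_cong_def equiv_def by (meson symD)

lemma lc_trans: "lattice_cong n T \<Longrightarrow> (x,y) \<in> T \<Longrightarrow> (y,z) \<in> T \<Longrightarrow> (x,z) \<in> T"
  unfolding lattice_cong_def equiv_def by (meson transD)

lemma lc_join: "lattice_cong n T \<Longrightarrow> (x,y) \<in> T \<Longrightarrow> z \<in> perms n \<Longrightarrow> (wjoin n x z, wjoin n y z) \<in> T"
  using lc_sub[of n T x y] unfolding lattice_cong_def by blast

lemma lc_meet: "lattice_cong n T \<Longrightarrow> (x,y) \<in> T \<Longrightarrow> z \<in> perms n \<Longrightarrow> (wmeet n x z, wmeet n y z) \<in> T"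
  using lc_sub[of n T x y] unfolding lattice_cong_def by blast

lemma lc_intro:
  assumes sub: "T \<subseteq> perms n \<times> perms n"
    and refl: "\<And>x. x \<in> perms n \<Longrightarrow> (x,x) \<in> T"
    and sym: "\<And>x y. (x,y) \<in> T \<Longrightarrow> (y,x) \<in> T"
    and trans: "\<And>x y z. (x,y) \<in> T \<Longrightarrow> (y,z) \<in> T \<Longrightarrow> (x,z) \<in> T"
    and jn: "\<And>x y z. (x,y) \<in> T \<Longrightarrow> z \<in> perms n \<Longrightarrow> (wjoin n x z, wjoin n y z) \<in> T"
    and mt: "\<And>x y z. (x,y) \<in> T \<Longrightarrow> z \<in> perms n \<Longrightarrow> (wmeet n x z, wmeet n y z) \<in> T"
  shows "lattice_cong n T"
  unfolding lattice_cong_def equiv_def refl_on_def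
  using sub refl jn mt by (auto intro: symI transI sym trans)

lemma ident_le: "x \<in> perms n \<Longrightarrow> weak_le (ident n) x"
  by (simp add: weak_le_def inv_ident)

lemma cong_le:
  assumes LT: "lattice_cong n \<Theta>" and LP: "lattice_cong n \<Psi>"
    and H: "\<And>g. g \<in> perms n \<Longrightarrow> join_irreducible g \<Longrightarrow> contracts \<Theta> g \<Longrightarrow> contracts \<Psi> g"
  shows "\<Theta> \<subseteq> \<Psi>"
proof -
  have step: "\<And>a b. a \<in> perms n \<Longrightarrow> b \<in> perms n \<Longrightarrow> weak_le a b \<Longrightarrow> (a,b) \<in> \<Theta> \<Longrightarrow> (a,b) \<in> \<Psi>"
  proof -
    fix a b
    show "a \<in> perms n \<Longrightarrow> b \<in> perms n \<Longrightarrow> weak_le a b \<Longrightarrow> (a,b) \<in> \<Theta> \<Longrightarrow> (a,b) \<in> \<Psi>"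
    proof (induction "card (inv_set b - inv_set a)" arbitrary: a rule: less_induct)
      case less
      note a = less.prems(1) and b = less.prems(2) and ab = less.prems(3) and abT = less.prems(4)
      show ?case
      proof (cases "a = b")
        case True then show ?thesis using lc_refl[OF LP a] by simp
      next
        case False
        let ?S = "\<lambda>j. j \<in> perms n \<and> weak_le j b \<and> \<not> weak_le j a"
        have Sb: "?S b" using b False weak_le_antisym[OF a b ab] weak_le_refl by blast
        obtain j where Sj: "?S j" and mj: "\<forall>y. ?S y \<longrightarrow> card (inv_set j) \<le> card (inv_set y)"
          using ex_has_least_nat[of ?S b "\<lambda>y. card (inv_set y)", OF Sb] by blast
        have j: "j \<in> perms n" using Sj by simp
        have lj: "length j = n" using perms_length[OF j] .
        have C1: "weak_le z a" if z: "z \<in> perms n" "weak_less z j" for z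
        proof (rule ccontr)
          assume na: "\<not> weak_le z a"
          have "weak_le z b" using z Sj weak_le_trans by (auto simp: weak_less_def)
          then have Sz: "?S z" using z na by simp
          have "inv_set z \<subseteq> inv_set j" "inv_set z \<noteq> inv_set j"
            using z j inv_inj[of z n j] by (auto simp: weak_less_def weak_le_def)
          then have "inv_set z \<subset> inv_set j" by blast
          then have "card (inv_set z) < card (inv_set j)"
            by (rule psubset_card_mono[OF finite_subset[OF inv_sub_Pairs[OF j] finite_Pairs]])
          moreover have "card (inv_set j) \<le> card (inv_set z)" using mj Sz by blast
          ultimately show False by simp
        qed
        have ja: "weak_less (ident n) j"
          using Sj ident_le[OF j] ident_le[OF a] by (auto simp: weak_less_def)
        obtain x0 where x0: "x0 \<in> perms n" "covers x0 j"
          using cover_exists[OF ident_perms j ja] by blast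
        have uniq: "x1 = x2" if x1: "x1 \<in> perms n" "covers x1 j" and x2: "x2 \<in> perms n" "covers x2 j" for x1 x2
        proof (rule ccontr)
          assume ne: "x1 \<noteq> x2"
          have c1: "weak_less x1 j" "\<not> (\<exists>z\<in>perms n. weak_less x1 z \<and> weak_less z j)"
            using x1 covers_perm[OF j] by auto
          have c2: "weak_less x2 j" "\<not> (\<exists>z\<in>perms n. weak_less x2 z \<and> weak_less z j)"
            using x2 covers_perm[OF j] by auto
          have x1a: "weak_le x1 a" using C1[OF x1(1) c1(1)] .
          have x2a: "weak_le x2 a" using C1[OF x2(1) c2(1)] .
          let ?m = "wjoin n x1 x2"
          have m: "?m \<in> perms n" using wjoin(1)[OF x1(1) x2(1)] .
          have mj: "weak_le ?m j" using wjoin_lub[OF x1(1) x2(1) j] c1 c2 by (simp add: weak_less_def)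
          have ma: "weak_le ?m a" using wjoin_lub[OF x1(1) x2(1) a x1a x2a] .
          have x1m: "weak_le x1 ?m" "weak_le x2 ?m" using wjoin_ub[OF x1(1) x2(1)] by auto
          show False
          proof (cases "?m = x1")
            case True
            then have "weak_less x2 x1" using x1m ne by (simp add: weak_less_def)
            then show False using c2 c1(1) x1(1) by blast
          next
            case False
            have "?m \<noteq> j" using ma Sj by auto
            then have "weak_less x1 ?m" "weak_less ?m j" using False x1m mj by (auto simp: weak_less_def)
            then show False using c1 m by blast
          qed
        qed
        have J: "join_irreducible j" unfolding JI_iff[OF j]
          using x0 uniq by blast
        have lcj: "lower_cover j \<in> perms n" using JI_lc(1)[OF J] lj by simp
        have lca: "weak_le (lower_cover j) a" using C1[OF lcj lc_less[OF J]] .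
        have lcle: "weak_le (lower_cover j) j" using lc_less[OF J] by (simp add: weak_less_def)
        let ?m = "wmeet n a j"
        have m: "?m \<in> perms n" using wmeet(1)[OF a j] .
        have "(wmeet n b j, wmeet n a j) \<in> \<Theta>" using lc_meet[OF LT lc_sym[OF LT abT] j] .
        moreover have "wmeet n b j = j" using wmeet_le(2)[OF j b] Sj by simp
        ultimately have jm: "(j, ?m) \<in> \<Theta>" by simp
        have mle: "weak_le ?m j" "weak_le ?m a" using wmeet_lb[OF a j] by auto
        have "?m \<noteq> j" using mle Sj by auto
        then have "weak_less ?m j" using mle by (simp add: weak_less_def)
        then have mlc: "weak_le ?m (lower_cover j)" using below_JI[OF J] m lj by simp
        have "(wjoin n ?m (lower_cover j), wjoin n j (lower_cover j)) \<in> \<Theta>"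
          using lc_join[OF LT lc_sym[OF LT jm] lcj] .
        moreover have "wjoin n ?m (lower_cover j) = lower_cover j" using wjoin_le(1)[OF m lcj mlc] .
        moreover have "wjoin n j (lower_cover j) = j" using wjoin_le(2)[OF lcj j lcle] .
        ultimately have "(lower_cover j, j) \<in> \<Theta>" by simp
        then have "contracts \<Theta> j" unfolding contracts_def using lc_sym[OF LT] by blast
        then have cP: "(j, lower_cover j) \<in> \<Psi>" using H[OF j J] unfolding contracts_def by blast
        let ?a' = "wjoin n j a"
        have a': "?a' \<in> perms n" using wjoin(1)[OF j a] .
        have "(wjoin n j a, wjoin n (lower_cover j) a) \<in> \<Psi>" using lc_join[OF LP cP a] .
        moreover have "wjoin n (lower_cover j) a = a" using wjoin_le(1)[OF lcj a lca] .
        ultimately have a'aP: "(?a', a) \<in> \<Psi>" by simp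
        have aa': "weak_le a ?a'" "weak_le j ?a'" using wjoin_ub[OF j a] by auto
        have a'b: "weak_le ?a' b" using wjoin_lub[OF j a b] Sj ab by simp
        have "(wjoin n a ?a', wjoin n b ?a') \<in> \<Theta>" using lc_join[OF LT abT a'] .
        moreover have "wjoin n a ?a' = ?a'" using wjoin_le(1)[OF a a' aa'(1)] .
        moreover have "wjoin n b ?a' = b" using wjoin_le(2)[OF a' b a'b] .
        ultimately have a'bT: "(?a', b) \<in> \<Theta>" by simp
        have "?a' \<noteq> a" using aa'(2) Sj by auto
        then have "inv_set a \<subset> inv_set ?a'" using aa'(1) inv_inj[OF a a'] by (auto simp: weak_le_def)
        moreover have "inv_set ?a' \<subseteq> inv_set b" using a'b by (simp add: weak_le_def)
        ultimately have "inv_set b - inv_set ?a' \<subset> inv_set b - inv_set a" using aa'(1) by (auto simp: weak_le_def)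
        moreover have fin: "finite (inv_set b - inv_set a)"
          using finite_subset[OF inv_sub_Pairs[OF b] finite_Pairs] by blast
        ultimately have "card (inv_set b - inv_set ?a') < card (inv_set b - inv_set a)"
          using psubset_card_mono[OF fin] by blast
        then have "(?a', b) \<in> \<Psi>" using less.hyps[OF _ a' b a'b a'bT] by blast
        then show ?thesis using lc_trans[OF LP lc_sym[OF LP a'aP]] by blast
      qed
    qed
  qed
  show ?thesis
  proof (clarify)
    fix x y assume xy: "(x,y) \<in> \<Theta>"
    have x: "x \<in> perms n" and y: "y \<in> perms n" using lc_sub[OF LT xy] by auto
    let ?m = "wmeet n x y"
    have m: "?m \<in> perms n" using wmeet(1)[OF x y] .
    have "(wmeet n x x, wmeet n y x) \<in> \<Theta>" using lc_meet[OF LT xy x] .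
    then have "(x, ?m) \<in> \<Theta>" using wmeet_le(1)[OF x x weak_le_refl] wmeet_comm[OF y x] by simp
    then have "(?m, x) \<in> \<Psi>" using step[OF m x] wmeet_lb[OF x y] lc_sym[OF LT] by blast
    have "(wmeet n y y, wmeet n x y) \<in> \<Theta>" using lc_meet[OF LT lc_sym[OF LT xy] y] .
    then have "(y, ?m) \<in> \<Theta>" using wmeet_le(1)[OF y y weak_le_refl] by simp
    then have "(?m, y) \<in> \<Psi>" using step[OF m y] wmeet_lb[OF x y] lc_sym[OF LT] by blast
    then show "(x,y) \<in> \<Psi>" using lc_trans[OF LP lc_sym[OF LP \<open>(?m, x) \<in> \<Psi>\<close>]] by blast
  qed
qed

lemma length_ident[simp]: "length (ident k) = k" by (simp add: ident_def)

lemma full_cong: "lattice_cong n (perms n \<times> perms n)"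
  by (rule lc_intro) (auto simp: wjoin(1) wmeet(1))

lemma Tr_cong: "lattice_cong n (Tr C n)"
proof -
  let ?F = "{\<Theta>. lattice_cong n \<Theta> \<and>
     (\<forall>g\<in>perms n. join_irreducible g \<and> (\<exists>y\<in>C. is_translate g y) \<longrightarrow> contracts \<Theta> g)}"
  have full: "perms n \<times> perms n \<in> ?F"
    using full_cong JI_lc(1) perms_length by (auto simp: contracts_def)
  have T: "Tr C n = \<Inter> ?F" unfolding Tr_def ..
  show ?thesis unfolding T
  proof (rule lc_intro)
    show "\<Inter> ?F \<subseteq> perms n \<times> perms n" using full by blast
    show "(x,x) \<in> \<Inter> ?F" if "x \<in> perms n" for x using lc_refl that by blast
    show "(y,x) \<in> \<Inter> ?F" if "(x,y) \<in> \<Inter> ?F" for x y using lc_sym that by blast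
    show "(x,z) \<in> \<Inter> ?F" if "(x,y) \<in> \<Inter> ?F" "(y,z) \<in> \<Inter> ?F" for x y z using lc_trans that by blast
    show "(wjoin n x z, wjoin n y z) \<in> \<Inter> ?F" if "(x,y) \<in> \<Inter> ?F" "z \<in> perms n" for x y z
      using lc_join that by blast
    show "(wmeet n x z, wmeet n y z) \<in> \<Inter> ?F" if "(x,y) \<in> \<Inter> ?F" "z \<in> perms n" for x y z
      using lc_meet that by blast
  qed
qed

lemma Tr_contr: "g \<in> perms n \<Longrightarrow> join_irreducible g \<Longrightarrow> y \<in> C \<Longrightarrow> is_translate g y \<Longrightarrow>
   (g, lower_cover g) \<in> Tr C n"
  unfolding Tr_def contracts_def by blast

lemma Tr_least: "lattice_cong n \<Theta> \<Longrightarrow>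
   (\<And>g y. g \<in> perms n \<Longrightarrow> join_irreducible g \<Longrightarrow> y \<in> C \<Longrightarrow> is_translate g y \<Longrightarrow> contracts \<Theta> g)
   \<Longrightarrow> Tr C n \<subseteq> \<Theta>"
  unfolding Tr_def by blast

lemma join_prod:
  assumes a: "a \<in> perms p" and b: "b \<in> perms q" and c: "c \<in> perms p" and d: "d \<in> perms q"
  shows "wjoin (p+q) (a \<otimes> b) (c \<otimes> d) = wjoin p a c \<otimes> wjoin q b d"
proof -
  have ab: "a \<otimes> b \<in> perms (p+q)" and cd: "c \<otimes> d \<in> perms (p+q)" using prod_perms a b c d by auto
  let ?x = "wjoin (p+q) (a \<otimes> b) (c \<otimes> d)"
  have x: "?x \<in> perms (p+q)" using wjoin(1)[OF ab cd] .
  have ac: "wjoin p a c \<in> perms p" and bd: "wjoin q b d \<in> perms q" using wjoin(1) a b c d by auto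
  have "weak_le (a \<otimes> b) (wjoin p a c \<otimes> wjoin q b d)"
    using prod_le[OF a b ac bd] wjoin_ub[OF a c] wjoin_ub[OF b d] by simp
  moreover have "weak_le (c \<otimes> d) (wjoin p a c \<otimes> wjoin q b d)"
    using prod_le[OF c d ac bd] wjoin_ub[OF a c] wjoin_ub[OF b d] by simp
  ultimately have "weak_le ?x (wjoin p a c \<otimes> wjoin q b d)"
    using wjoin_lub[OF ab cd prod_perms[OF ac bd]] by simp
  then obtain x1 x2 where x12: "x1 \<in> perms p" "x2 \<in> perms q" "?x = x1 \<otimes> x2"
    using below_prod[OF x ac bd] by blast
  have "restr 0 p ?x = wjoin p (restr 0 p (a \<otimes> b)) (restr 0 p (c \<otimes> d))"
    using restr_join[OF ab cd, of 0 p] by simp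
  then have 1: "x1 = wjoin p a c" using x12 restr_prod a b c d by simp
  have "restr p (p+q) ?x = wjoin q (restr p (p+q) (a \<otimes> b)) (restr p (p+q) (c \<otimes> d))"
    using restr_join[OF ab cd, of p "p+q"] by simp
  then have 2: "x2 = wjoin q b d" using x12 restr_prod a b c d by simp
  show ?thesis using x12 1 2 by simp
qed

lemma meet_prod:
  assumes a: "a \<in> perms p" and b: "b \<in> perms q" and c: "c \<in> perms p" and d: "d \<in> perms q"
  shows "wmeet (p+q) (a \<otimes> b) (c \<otimes> d) = wmeet p a c \<otimes> wmeet q b d"
proof -
  have ab: "a \<otimes> b \<in> perms (p+q)" and cd: "c \<otimes> d \<in> perms (p+q)" using prod_perms a b c d by auto
  let ?x = "wmeet (p+q) (a \<otimes> b) (c \<otimes> d)"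
  have x: "?x \<in> perms (p+q)" using wmeet(1)[OF ab cd] .
  have "weak_le ?x (a \<otimes> b)" using wmeet_lb[OF ab cd] by simp
  then obtain x1 x2 where x12: "x1 \<in> perms p" "x2 \<in> perms q" "?x = x1 \<otimes> x2"
    using below_prod[OF x a b] by blast
  have "restr 0 p ?x = wmeet p (restr 0 p (a \<otimes> b)) (restr 0 p (c \<otimes> d))"
    using restr_meet[OF ab cd, of 0 p] by simp
  then have 1: "x1 = wmeet p a c" using x12 restr_prod a b c d by simp
  have "restr p (p+q) ?x = wmeet q (restr p (p+q) (a \<otimes> b)) (restr p (p+q) (c \<otimes> d))"
    using restr_meet[OF ab cd, of p "p+q"] by simp
  then have 2: "x2 = wmeet q b d" using x12 restr_prod a b c d by simp
  show ?thesis using x12 1 2 by simp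
qed

lemma wjoin_idem: "x \<in> perms n \<Longrightarrow> wjoin n x x = x" using wjoin_le(1)[OF _ _ weak_le_refl] by blast
lemma wmeet_idem: "x \<in> perms n \<Longrightarrow> wmeet n x x = x" using wmeet_le(1)[OF _ _ weak_le_refl] by blast

lemma is_translate_iff: "is_translate g y \<longleftrightarrow> (\<exists>a b. g = ident a \<otimes> y \<otimes> ident b)"
  by (simp add: is_translate_def)

lemma translate_perm:
  assumes g: "g = ident a \<otimes> y \<otimes> ident b" and y: "y \<in> perms k"
  shows "g \<in> perms (a + k + b)"
  using g prod_perms[OF prod_perms[OF ident_perms y] ident_perms] by simp

lemma inv_translate:
  assumes y: "y \<in> perms k"
  shows "inv_set (ident a \<otimes> y \<otimes> ident b) = sh a (inv_set y)"
proof -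
  have 1: "inv_set (ident a \<otimes> y) = inv_set (ident a) \<union> sh a (inv_set y)"
    by (rule inv_prod[OF ident_perms y])
  have 2: "inv_set ((ident a \<otimes> y) \<otimes> ident b) = inv_set (ident a \<otimes> y) \<union> sh (a+k) (inv_set (ident b))"
    by (rule inv_prod[OF prod_perms[OF ident_perms y] ident_perms])
  show ?thesis using 1 2 by (simp add: inv_ident)
qed

lemma left_emb:
  assumes C: "\<forall>x\<in>C. join_irreducible x \<and> untranslated x"
    and uu: "(u,u') \<in> Tr C p"
  shows "(u \<otimes> ident q, u' \<otimes> ident q) \<in> Tr C (p+q)"
proof -
  let ?T = "Tr C (p+q)"
  let ?F = "{(u,u'). u \<in> perms p \<and> u' \<in> perms p \<and> (u \<otimes> ident q, u' \<otimes> ident q) \<in> ?T}"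
  have LT: "lattice_cong (p+q) ?T" by (rule Tr_cong)
  have ee: "\<And>x. x \<in> perms p \<Longrightarrow> x \<otimes> ident q \<in> perms (p+q)" using prod_perms ident_perms by blast
  have jn: "\<And>x z. x \<in> perms p \<Longrightarrow> z \<in> perms p \<Longrightarrow> wjoin (p+q) (x \<otimes> ident q) (z \<otimes> ident q) = wjoin p x z \<otimes> ident q"
    using join_prod[OF _ ident_perms _ ident_perms] wjoin_idem[OF ident_perms] by simp
  have mt: "\<And>x z. x \<in> perms p \<Longrightarrow> z \<in> perms p \<Longrightarrow> wmeet (p+q) (x \<otimes> ident q) (z \<otimes> ident q) = wmeet p x z \<otimes> ident q"
    using meet_prod[OF _ ident_perms _ ident_perms] wmeet_idem[OF ident_perms] by simp
  have "lattice_cong p ?F"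
  proof (rule lc_intro)
    show "?F \<subseteq> perms p \<times> perms p" by blast
    show "(x,x) \<in> ?F" if "x \<in> perms p" for x using lc_refl[OF LT ee[OF that]] that by blast
    show "(y,x) \<in> ?F" if "(x,y) \<in> ?F" for x y using lc_sym[OF LT] that by blast
    show "(x,z) \<in> ?F" if "(x,y) \<in> ?F" "(y,z) \<in> ?F" for x y z using lc_trans[OF LT] that by blast
    show "(wjoin p x z, wjoin p y z) \<in> ?F" if "(x,y) \<in> ?F" "z \<in> perms p" for x y z
    proof -
      have xy: "x \<in> perms p" "y \<in> perms p" "(x \<otimes> ident q, y \<otimes> ident q) \<in> ?T" using that by auto
      have "(wjoin (p+q) (x \<otimes> ident q) (z \<otimes> ident q), wjoin (p+q) (y \<otimes> ident q) (z \<otimes> ident q)) \<in> ?T"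
        using lc_join[OF LT xy(3) ee[OF that(2)]] .
      then show ?thesis using jn[OF xy(1) that(2)] jn[OF xy(2) that(2)] wjoin(1) xy that(2) by auto
    qed
    show "(wmeet p x z, wmeet p y z) \<in> ?F" if "(x,y) \<in> ?F" "z \<in> perms p" for x y z
    proof -
      have xy: "x \<in> perms p" "y \<in> perms p" "(x \<otimes> ident q, y \<otimes> ident q) \<in> ?T" using that by auto
      have "(wmeet (p+q) (x \<otimes> ident q) (z \<otimes> ident q), wmeet (p+q) (y \<otimes> ident q) (z \<otimes> ident q)) \<in> ?T"
        using lc_meet[OF LT xy(3) ee[OF that(2)]] .
      then show ?thesis using mt[OF xy(1) that(2)] mt[OF xy(2) that(2)] wmeet(1) xy that(2) by auto
    qed
  qed
  moreover have "contracts ?F g" if g: "g \<in> perms p" "join_irreducible g" "y \<in> C" "is_translate g y" for g y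
  proof -
    obtain a b where ab: "g = ident a \<otimes> y \<otimes> ident b" using g(4) by (auto simp: is_translate_iff)
    have J': "join_irreducible (g \<otimes> ident q)" using JI_right(1)[OF g(1)] g(2) by simp
    have lc: "lower_cover (g \<otimes> ident q) = lower_cover g \<otimes> ident q" using JI_right(2)[OF g(1) g(2)] .
    have "g \<otimes> ident q = ident a \<otimes> y \<otimes> ident (b + q)" using ab by (simp add: prod_assoc ident_prod[symmetric])
    then have "is_translate (g \<otimes> ident q) y" by (auto simp: is_translate_iff)
    then have "(g \<otimes> ident q, lower_cover (g \<otimes> ident q)) \<in> ?T" using Tr_contr[OF ee[OF g(1)] J' g(3)] by blast
    moreover have "lower_cover g \<in> perms p" using JI_lc(1)[OF g(2)] perms_length[OF g(1)] by simp
    ultimately show ?thesis unfolding contracts_def using lc g(1) by simp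
  qed
  ultimately have "Tr C p \<subseteq> ?F" by (intro Tr_least) auto
  then show ?thesis using uu by blast
qed

lemma right_emb:
  assumes C: "\<forall>x\<in>C. join_irreducible x \<and> untranslated x"
    and vv: "(v,v') \<in> Tr C q"
  shows "(ident p \<otimes> v, ident p \<otimes> v') \<in> Tr C (p+q)"
proof -
  let ?T = "Tr C (p+q)"
  let ?F = "{(v,v'). v \<in> perms q \<and> v' \<in> perms q \<and> (ident p \<otimes> v, ident p \<otimes> v') \<in> ?T}"
  have LT: "lattice_cong (p+q) ?T" by (rule Tr_cong)
  have ee: "\<And>x. x \<in> perms q \<Longrightarrow> ident p \<otimes> x \<in> perms (p+q)" using prod_perms ident_perms by blast
  have jn: "\<And>x z. x \<in> perms q \<Longrightarrow> z \<in> perms q \<Longrightarrow> wjoin (p+q) (ident p \<otimes> x) (ident p \<otimes> z) = ident p \<otimes> wjoin q x z"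
    using join_prod[OF ident_perms _ ident_perms] wjoin_idem[OF ident_perms] by simp
  have mt: "\<And>x z. x \<in> perms q \<Longrightarrow> z \<in> perms q \<Longrightarrow> wmeet (p+q) (ident p \<otimes> x) (ident p \<otimes> z) = ident p \<otimes> wmeet q x z"
    using meet_prod[OF ident_perms _ ident_perms] wmeet_idem[OF ident_perms] by simp
  have "lattice_cong q ?F"
  proof (rule lc_intro)
    show "?F \<subseteq> perms q \<times> perms q" by blast
    show "(x,x) \<in> ?F" if "x \<in> perms q" for x using lc_refl[OF LT ee[OF that]] that by blast
    show "(y,x) \<in> ?F" if "(x,y) \<in> ?F" for x y using lc_sym[OF LT] that by blast
    show "(x,z) \<in> ?F" if "(x,y) \<in> ?F" "(y,z) \<in> ?F" for x y z using lc_trans[OF LT] that by blast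
    show "(wjoin q x z, wjoin q y z) \<in> ?F" if "(x,y) \<in> ?F" "z \<in> perms q" for x y z
    proof -
      have xy: "x \<in> perms q" "y \<in> perms q" "(ident p \<otimes> x, ident p \<otimes> y) \<in> ?T" using that by auto
      have "(wjoin (p+q) (ident p \<otimes> x) (ident p \<otimes> z), wjoin (p+q) (ident p \<otimes> y) (ident p \<otimes> z)) \<in> ?T"
        using lc_join[OF LT xy(3) ee[OF that(2)]] .
      then show ?thesis using jn[OF xy(1) that(2)] jn[OF xy(2) that(2)] wjoin(1) xy that(2) by auto
    qed
    show "(wmeet q x z, wmeet q y z) \<in> ?F" if "(x,y) \<in> ?F" "z \<in> perms q" for x y z
    proof -
      have xy: "x \<in> perms q" "y \<in> perms q" "(ident p \<otimes> x, ident p \<otimes> y) \<in> ?T" using that by auto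
      have "(wmeet (p+q) (ident p \<otimes> x) (ident p \<otimes> z), wmeet (p+q) (ident p \<otimes> y) (ident p \<otimes> z)) \<in> ?T"
        using lc_meet[OF LT xy(3) ee[OF that(2)]] .
      then show ?thesis using mt[OF xy(1) that(2)] mt[OF xy(2) that(2)] wmeet(1) xy that(2) by auto
    qed
  qed
  moreover have "contracts ?F g" if g: "g \<in> perms q" "join_irreducible g" "y \<in> C" "is_translate g y" for g y
  proof -
    obtain a b where ab: "g = ident a \<otimes> y \<otimes> ident b" using g(4) by (auto simp: is_translate_iff)
    have J': "join_irreducible (ident p \<otimes> g)" using JI_left(1)[OF g(1)] g(2) by simp
    have lc: "lower_cover (ident p \<otimes> g) = ident p \<otimes> lower_cover g" using JI_left(2)[OF g(1) g(2)] .
    have "ident p \<otimes> g = ident (p + a) \<otimes> y \<otimes> ident b" using ab by (simp add: prod_assoc ident_prod[symmetric])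
    then have "is_translate (ident p \<otimes> g) y" by (auto simp: is_translate_iff)
    then have "(ident p \<otimes> g, lower_cover (ident p \<otimes> g)) \<in> ?T" using Tr_contr[OF ee[OF g(1)] J' g(3)] by blast
    moreover have "lower_cover g \<in> perms q" using JI_lc(1)[OF g(2)] perms_length[OF g(1)] by simp
    ultimately show ?thesis unfolding contracts_def using lc g(1) by simp
  qed
  ultimately have "Tr C q \<subseteq> ?F" by (intro Tr_least) auto
  then show ?thesis using vv by blast
qed

lemma restr_eq_straddle:
  assumes y: "y \<in> perms k" and J: "join_irreducible y" and U: "untranslated y"
    and ap: "a < p" "p < a + k" and lm: "(l = 0 \<and> m = p) \<or> (l = p \<and> m = p + q)"
  shows "rs l m (sh a (inv_set y)) = rs l m (sh a (inv_set (lower_cover y)))"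
proof -
  have sub: "inv_set (lower_cover y) \<subseteq> inv_set y" using lc_less[OF J] by (simp add: weak_less_def weak_le_def)
  have st: "inv_set y - inv_set (lower_cover y) \<subseteq> {(1,k)}" using straddle[OF y J U] .
  show ?thesis
  proof (rule set_eqI, clarify)
    fix x z
    show "(x,z) \<in> rs l m (sh a (inv_set y)) \<longleftrightarrow> (x,z) \<in> rs l m (sh a (inv_set (lower_cover y)))"
    proof
      assume "(x,z) \<in> rs l m (sh a (inv_set (lower_cover y)))"
      then show "(x,z) \<in> rs l m (sh a (inv_set y))" using sub by (auto simp: rs_def mem_sh)
    next
      assume h: "(x,z) \<in> rs l m (sh a (inv_set y))"
      then have h1: "(x,z) \<in> Pairs (m - l)" "a \<le> x + l" "a \<le> z + l" "(x + l - a, z + l - a) \<in> inv_set y"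
        by (auto simp: rs_def mem_sh)
      show "(x,z) \<in> rs l m (sh a (inv_set (lower_cover y)))"
      proof (cases "(x + l - a, z + l - a) \<in> inv_set (lower_cover y)")
        case True then show ?thesis using h1 by (auto simp: rs_def mem_sh)
      next
        case False
        then have "(x + l - a, z + l - a) = (1, k)" using st h1(4) by blast
        then have "x + l = a + 1" "z + l = a + k" using h1 by auto
        then show ?thesis using h1(1) lm ap by (auto simp: Pairs_def)
      qed
    qed
  qed
qed

lemma restr_emb:
  assumes C: "\<forall>x\<in>C. join_irreducible x \<and> untranslated x"
    and xy: "(x,y) \<in> Tr C (p+q)"
  shows "(restr 0 p x, restr 0 p y) \<in> Tr C p \<and> (restr p (p+q) x, restr p (p+q) y) \<in> Tr C q"
proof -
  let ?Tp = "Tr C p" and ?Tq = "Tr C q"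
  let ?X = "{(x,y). x \<in> perms (p+q) \<and> y \<in> perms (p+q) \<and>
     (restr 0 p x, restr 0 p y) \<in> ?Tp \<and> (restr p (p+q) x, restr p (p+q) y) \<in> ?Tq}"
  have Lp: "lattice_cong p ?Tp" and Lq: "lattice_cong q ?Tq" by (rule Tr_cong)+
  have r1: "\<And>w. w \<in> perms (p+q) \<Longrightarrow> restr 0 p w \<in> perms p" using restr(1)[of _ "p+q" 0 p] by simp
  have r2: "\<And>w. w \<in> perms (p+q) \<Longrightarrow> restr p (p+q) w \<in> perms q" using restr(1)[of _ "p+q" p "p+q"] by simp
  have rj1: "\<And>x z. x \<in> perms (p+q) \<Longrightarrow> z \<in> perms (p+q) \<Longrightarrow> restr 0 p (wjoin (p+q) x z) = wjoin p (restr 0 p x) (restr 0 p z)"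
    using restr_join[of _ "p+q" _ 0 p] by simp
  have rj2: "\<And>x z. x \<in> perms (p+q) \<Longrightarrow> z \<in> perms (p+q) \<Longrightarrow> restr p (p+q) (wjoin (p+q) x z) = wjoin q (restr p (p+q) x) (restr p (p+q) z)"
    using restr_join[of _ "p+q" _ p "p+q"] by simp
  have rm1: "\<And>x z. x \<in> perms (p+q) \<Longrightarrow> z \<in> perms (p+q) \<Longrightarrow> restr 0 p (wmeet (p+q) x z) = wmeet p (restr 0 p x) (restr 0 p z)"
    using restr_meet[of _ "p+q" _ 0 p] by simp
  have rm2: "\<And>x z. x \<in> perms (p+q) \<Longrightarrow> z \<in> perms (p+q) \<Longrightarrow> restr p (p+q) (wmeet (p+q) x z) = wmeet q (restr p (p+q) x) (restr p (p+q) z)"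
    using restr_meet[of _ "p+q" _ p "p+q"] by simp
  have "lattice_cong (p+q) ?X"
  proof (rule lc_intro)
    show "?X \<subseteq> perms (p+q) \<times> perms (p+q)" by blast
    show "(x,x) \<in> ?X" if "x \<in> perms (p+q)" for x
      using lc_refl[OF Lp r1[OF that]] lc_refl[OF Lq r2[OF that]] that by blast
    show "(y,x) \<in> ?X" if "(x,y) \<in> ?X" for x y using lc_sym[OF Lp] lc_sym[OF Lq] that by blast
    show "(x,z) \<in> ?X" if "(x,y) \<in> ?X" "(y,z) \<in> ?X" for x y z
      using lc_trans[OF Lp] lc_trans[OF Lq] that by blast
    show "(wjoin (p+q) x z, wjoin (p+q) y z) \<in> ?X" if "(x,y) \<in> ?X" "z \<in> perms (p+q)" for x y z
    proof -
      have h: "x \<in> perms (p+q)" "y \<in> perms (p+q)" "(restr 0 p x, restr 0 p y) \<in> ?Tp"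
        "(restr p (p+q) x, restr p (p+q) y) \<in> ?Tq" using that by auto
      show ?thesis using lc_join[OF Lp h(3) r1[OF that(2)]] lc_join[OF Lq h(4) r2[OF that(2)]]
        rj1[OF h(1) that(2)] rj1[OF h(2) that(2)] rj2[OF h(1) that(2)] rj2[OF h(2) that(2)]
        wjoin(1)[OF h(1) that(2)] wjoin(1)[OF h(2) that(2)] by simp
    qed
    show "(wmeet (p+q) x z, wmeet (p+q) y z) \<in> ?X" if "(x,y) \<in> ?X" "z \<in> perms (p+q)" for x y z
    proof -
      have h: "x \<in> perms (p+q)" "y \<in> perms (p+q)" "(restr 0 p x, restr 0 p y) \<in> ?Tp"
        "(restr p (p+q) x, restr p (p+q) y) \<in> ?Tq" using that by auto
      show ?thesis using lc_meet[OF Lp h(3) r1[OF that(2)]] lc_meet[OF Lq h(4) r2[OF that(2)]]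
        rm1[OF h(1) that(2)] rm1[OF h(2) that(2)] rm2[OF h(1) that(2)] rm2[OF h(2) that(2)]
        wmeet(1)[OF h(1) that(2)] wmeet(1)[OF h(2) that(2)] by simp
    qed
  qed
  moreover have "contracts ?X g" if g: "g \<in> perms (p+q)" "join_irreducible g" "y \<in> C" "is_translate g y" for g y
  proof -
    obtain a b where ab: "g = ident a \<otimes> y \<otimes> ident b" using g(4) by (auto simp: is_translate_iff)
    define k where "k = length y"
    have Jy: "join_irreducible y" "untranslated y" using C g(3) by auto
    have y: "y \<in> perms k" using JI_perm[OF Jy(1)] k_def by simp
    have ys: "lower_cover y \<in> perms k" using JI_lc(1)[OF Jy(1)] k_def by simp
    have len: "a + k + b = p + q" using g(1) ab perms_length[OF g(1)] by (simp add: length_prod k_def)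
    have lcg: "lower_cover g = ident a \<otimes> lower_cover y \<otimes> ident b" using JI_trans(2)[OF y Jy(1)] ab by simp
    have gs: "lower_cover g \<in> perms (p+q)" using JI_lc(1)[OF g(2)] perms_length[OF g(1)] by simp
    consider "a + k \<le> p" | "p \<le> a" | "a < p \<and> p < a + k" by arith
    then have "(g, lower_cover g) \<in> ?X"
    proof cases
      case 1
      define r where "r = p - a - k"
      have br: "b = r + q" using len 1 r_def by simp
      let ?g1 = "ident a \<otimes> y \<otimes> ident r" and ?h1 = "ident a \<otimes> lower_cover y \<otimes> ident r"
      have g1: "?g1 \<in> perms p" using translate_perm[OF refl y, of a r] 1 r_def by simp
      have h1: "?h1 \<in> perms p" using translate_perm[OF refl ys, of a r] 1 r_def by simp
      have eg: "g = ?g1 \<otimes> ident q" using ab br by (simp add: prod_assoc ident_prod[symmetric])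
      have eh: "lower_cover g = ?h1 \<otimes> ident q" using lcg br by (simp add: prod_assoc ident_prod[symmetric])
      have J1: "join_irreducible ?g1" using JI_trans(1)[OF y] Jy by simp
      have lc1: "lower_cover ?g1 = ?h1" using JI_trans(2)[OF y Jy(1)] .
      have "(?g1, ?h1) \<in> ?Tp" using Tr_contr[OF g1 J1 g(3)] lc1 by (auto simp: is_translate_iff)
      moreover have "(ident q, ident q) \<in> ?Tq" using lc_refl[OF Lq ident_perms] .
      ultimately show ?thesis using restr_prod[OF g1 ident_perms] restr_prod[OF h1 ident_perms] eg eh g(1) gs
        by simp
    next
      case 2
      define s where "s = a - p"
      have as: "a = p + s" using 2 s_def by simp
      let ?g2 = "ident s \<otimes> y \<otimes> ident b" and ?h2 = "ident s \<otimes> lower_cover y \<otimes> ident b"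
      have q: "s + k + b = q" using len as by simp
      have g2: "?g2 \<in> perms q" using translate_perm[OF refl y, of s b] q by simp
      have h2: "?h2 \<in> perms q" using translate_perm[OF refl ys, of s b] q by simp
      have eg: "g = ident p \<otimes> ?g2" using ab as by (simp add: prod_assoc ident_prod[symmetric])
      have eh: "lower_cover g = ident p \<otimes> ?h2" using lcg as by (simp add: prod_assoc ident_prod[symmetric])
      have J2: "join_irreducible ?g2" using JI_trans(1)[OF y] Jy by simp
      have lc2: "lower_cover ?g2 = ?h2" using JI_trans(2)[OF y Jy(1)] .
      have "(?g2, ?h2) \<in> ?Tq" using Tr_contr[OF g2 J2 g(3)] lc2 by (auto simp: is_translate_iff)
      moreover have "(ident p, ident p) \<in> ?Tp" using lc_refl[OF Lp ident_perms] .
      ultimately show ?thesis using restr_prod[OF ident_perms g2] restr_prod[OF ident_perms h2] eg eh g(1) gs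
        by simp
    next
      case 3
      have ig: "inv_set g = sh a (inv_set y)" using inv_translate[OF y] ab by simp
      have ih: "inv_set (lower_cover g) = sh a (inv_set (lower_cover y))" using inv_translate[OF ys] lcg by simp
      have e1: "restr 0 p g = restr 0 p (lower_cover g)"
        unfolding restr_def ig ih using restr_eq_straddle[OF y Jy(1) Jy(2), of a p 0 p q] 3 by simp
      have e2: "restr p (p+q) g = restr p (p+q) (lower_cover g)"
        unfolding restr_def ig ih using restr_eq_straddle[OF y Jy(1) Jy(2), of a p p "p+q" q] 3 by simp
      show ?thesis using lc_refl[OF Lp r1[OF g(1)]] lc_refl[OF Lq r2[OF g(1)]] e1 e2 g(1) gs by simp
    qed
    then show ?thesis unfolding contracts_def .
  qed
  ultimately have "Tr C (p+q) \<subseteq> ?X" by (intro Tr_least) auto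
  then show ?thesis using xy by blast
qed

lemma Tr_translational:
  assumes C: "\<forall>x\<in>C. join_irreducible x \<and> untranslated x"
  shows "translational (Tr C)"
  unfolding translational_def
proof (intro allI ballI)
  fix p q u u' v v'
  assume u: "u \<in> perms p" and u': "u' \<in> perms p" and v: "v \<in> perms q" and v': "v' \<in> perms q"
  let ?T = "Tr C (p+q)"
  have LT: "lattice_cong (p+q) ?T" by (rule Tr_cong)
  show "(u \<otimes> v, u' \<otimes> v') \<in> ?T \<longleftrightarrow> (u, u') \<in> Tr C p \<and> (v, v') \<in> Tr C q"
  proof
    assume "(u \<otimes> v, u' \<otimes> v') \<in> ?T"
    then show "(u, u') \<in> Tr C p \<and> (v, v') \<in> Tr C q"
      using restr_emb[OF C] restr_prod[OF u v] restr_prod[OF u' v'] by metis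
  next
    assume h: "(u, u') \<in> Tr C p \<and> (v, v') \<in> Tr C q"
    have h1: "(u \<otimes> ident q, u' \<otimes> ident q) \<in> ?T" using left_emb[OF C] h by blast
    have h2: "(ident p \<otimes> v, ident p \<otimes> v') \<in> ?T" using right_emb[OF C] h by blast
    have eq: "wjoin (p+q) (x \<otimes> ident q) (ident p \<otimes> w) = x \<otimes> w" if x: "x \<in> perms p" and w: "w \<in> perms q" for x w
    proof -
      have "wjoin (p+q) (x \<otimes> ident q) (ident p \<otimes> w) = wjoin p x (ident p) \<otimes> wjoin q (ident q) w"
        by (rule join_prod[OF x ident_perms ident_perms w])
      moreover have "wjoin p x (ident p) = x" using wjoin_le(2)[OF ident_perms x ident_le[OF x]] .
      moreover have "wjoin q (ident q) w = w" using wjoin_le(1)[OF ident_perms w ident_le[OF w]] .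
      ultimately show ?thesis by simp
    qed
    have p1: "ident p \<otimes> v \<in> perms (p+q)" "ident p \<otimes> v' \<in> perms (p+q)" "u' \<otimes> ident q \<in> perms (p+q)"
      "u \<otimes> ident q \<in> perms (p+q)"
      using prod_perms ident_perms u u' v v' by auto
    have "(wjoin (p+q) (u \<otimes> ident q) (ident p \<otimes> v), wjoin (p+q) (u' \<otimes> ident q) (ident p \<otimes> v)) \<in> ?T"
      using lc_join[OF LT h1 p1(1)] .
    then have s1: "(u \<otimes> v, u' \<otimes> v) \<in> ?T" using eq u u' v by simp
    have "(wjoin (p+q) (ident p \<otimes> v) (u' \<otimes> ident q), wjoin (p+q) (ident p \<otimes> v') (u' \<otimes> ident q)) \<in> ?T"
      using lc_join[OF LT h2 p1(3)] .
    then have s2: "(u' \<otimes> v, u' \<otimes> v') \<in> ?T"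
      using eq u' v v' wjoin_comm[OF p1(1) p1(3)] wjoin_comm[OF p1(2) p1(3)] by simp
    show "(u \<otimes> v, u' \<otimes> v') \<in> ?T" using lc_trans[OF LT s1 s2] .
  qed
qed

theorem proposition7p1:
  fixes \<Theta> :: "nat \<Rightarrow> (nat list \<times> nat list) set"
  assumes "\<And>n. lattice_cong n (\<Theta> n)"
  shows "translational \<Theta> \<longleftrightarrow>
    (\<exists>C. (\<forall>x\<in>C. join_irreducible x \<and> untranslated x) \<and> (\<forall>n. \<Theta> n = Tr C n))"
proof
  assume TR: "translational \<Theta>"
  note TRD = TR[unfolded translational_def, rule_format]
  define C where "C = {y. join_irreducible y \<and> untranslated y \<and> (y, lower_cover y) \<in> \<Theta> (length y)}"
  have key: "(g, lower_cover g) \<in> \<Theta> (a + length y + b) \<longleftrightarrow> (y, lower_cover y) \<in> \<Theta> (length y)"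
    if g: "g = ident a \<otimes> y \<otimes> ident b" and J: "join_irreducible y" for g a y b
  proof -
    define k where "k = length y"
    have y: "y \<in> perms k" using JI_perm[OF J] k_def by simp
    have ys: "lower_cover y \<in> perms k" using JI_lc(1)[OF J] k_def by simp
    have lcg: "lower_cover g = ident a \<otimes> lower_cover y \<otimes> ident b" using JI_trans(2)[OF y J] g by simp
    have "(g, lower_cover g) \<in> \<Theta> (a + k + b) \<longleftrightarrow>
       (ident a \<otimes> y, ident a \<otimes> lower_cover y) \<in> \<Theta> (a + k) \<and> (ident b, ident b) \<in> \<Theta> b"
      unfolding lcg unfolding g by (rule TRD[OF prod_perms[OF ident_perms y] prod_perms[OF ident_perms ys] ident_perms ident_perms])
    also have "\<dots> \<longleftrightarrow> (ident a \<otimes> y, ident a \<otimes> lower_cover y) \<in> \<Theta> (a + k)"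
      using lc_refl[OF assms ident_perms] by simp
    also have "\<dots> \<longleftrightarrow> (ident a, ident a) \<in> \<Theta> a \<and> (y, lower_cover y) \<in> \<Theta> k"
      by (rule TRD[OF ident_perms ident_perms y ys])
    also have "\<dots> \<longleftrightarrow> (y, lower_cover y) \<in> \<Theta> k"
      using lc_refl[OF assms ident_perms] by simp
    finally show ?thesis unfolding k_def .
  qed
  have "\<Theta> n = Tr C n" for n
  proof
    show "Tr C n \<subseteq> \<Theta> n"
    proof (rule Tr_least[OF assms])
      fix g y assume g: "g \<in> perms n" "join_irreducible g" "y \<in> C" "is_translate g y"
      obtain a b where ab: "g = ident a \<otimes> y \<otimes> ident b" using g(4) by (auto simp: is_translate_iff)
      have Jy: "join_irreducible y" "(y, lower_cover y) \<in> \<Theta> (length y)" using g(3) C_def by auto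
      have n: "n = a + length y + b" using perms_length[OF g(1)] ab by (simp add: length_prod)
      show "contracts (\<Theta> n) g" unfolding contracts_def n using key[OF ab Jy(1)] Jy(2) by simp
    qed
  next
    show "\<Theta> n \<subseteq> Tr C n" unfolding Tr_def
    proof (rule Inter_greatest)
      fix \<Psi> assume "\<Psi> \<in> {\<Theta>. lattice_cong n \<Theta> \<and>
     (\<forall>g\<in>perms n. join_irreducible g \<and> (\<exists>y\<in>C. is_translate g y) \<longrightarrow> contracts \<Theta> g)}"
      then have LP: "lattice_cong n \<Psi>"
        and HP: "\<forall>g\<in>perms n. join_irreducible g \<and> (\<exists>y\<in>C. is_translate g y) \<longrightarrow> contracts \<Psi> g" by simp_all
      show "\<Theta> n \<subseteq> \<Psi>"
      proof (rule cong_le[OF assms LP])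
        fix g assume g: "g \<in> perms n" "join_irreducible g" "contracts (\<Theta> n) g"
        obtain a b y where ab: "g = ident a \<otimes> y \<otimes> ident b" "join_irreducible y" "untranslated y"
          using JI_form[OF g(1,2)] by blast
        have n: "n = a + length y + b" using perms_length[OF g(1)] ab(1) by (simp add: length_prod)
        have "(y, lower_cover y) \<in> \<Theta> (length y)" using key[OF ab(1,2)] g(3) n by (simp add: contracts_def)
        then have "y \<in> C" using ab C_def by simp
        moreover have "is_translate g y" using ab(1) by (auto simp: is_translate_iff)
        ultimately show "contracts \<Psi> g" using HP g by blast
      qed
    qed
  qed
  moreover have "\<forall>x\<in>C. join_irreducible x \<and> untranslated x" using C_def by simp
  ultimately show "\<exists>C. (\<forall>x\<in>C. join_irreducible x \<and> untranslated x) \<and> (\<forall>n. \<Theta> n = Tr C n)" by blast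
next
  assume "\<exists>C. (\<forall>x\<in>C. join_irreducible x \<and> untranslated x) \<and> (\<forall>n. \<Theta> n = Tr C n)"
  then obtain C where C: "\<forall>x\<in>C. join_irreducible x \<and> untranslated x" and E: "\<forall>n. \<Theta> n = Tr C n" by blast
  have "\<Theta> = Tr C" using E by auto
  then show "translational \<Theta>" using Tr_translational[OF C] by simp
qed

end
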